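(* Let $\alpha\in\mathbb{R}^n_{>0}$ be generic, let $S=\{1,\dots,|S|\}$ be $\alpha$-short with $|S|\ge2$, and let $i,j\notin S$ with $\alpha_i>\alpha_j$. Put $\alpha^\pm_{i,j}=(\alpha_1,\dots,\widehat{\alpha_i},\dots,\widehat{\alpha_j},\dots,\alpha_n,\alpha_i\pm\alpha_j)$. Then there exist diffeomorphisms $s_\pm:D^\pm_{i,j}(\alpha)\cap U_S(\alpha)\to U_S(\alpha^\pm_{i,j})$ given by $$s_\pm([p,q])=\Big[p_1,\dots,p_{|S|},0,\dots,0,\ q_1,\dots,\widehat{q_i},\dots,\widehat{q_j},\dots,q_n,\ \sqrt{\tfrac{\alpha_i\pm\alpha_j}{\alpha_i}}\,q_i\Big].$$
   Context: For $T\subset\{1,\dots,n\}$, $\varepsilon_T(\alpha)=\sum_{i\in T}\alpha_i-\sum_{i\notin T}\alpha_i$; $\alpha$ generic if all $\varepsilon_T(\alpha)\ne0$; $T$ is $\alpha$-short if $\varepsilon_T(\alpha)<0$. Hyperpolygon space: $(p,q)\in T^*\mathbb{C}^{2n}$, $p_i=(a_i,b_i)$ row and $q_i=(c_i,d_i)^t$ column vectors in $\mathbb{C}^2$; $K=(SU(2)\times U(1)^n)/\mathbb{Z}_2$ acts by $(p,q)\cdot[A;e]=((e_i^{-1}p_iA)_i,(A^{-1}q_ie_i)_i)$; $\mu_{\mathbb{R}}(p,q)=\frac{\mathbf{i}}{2}\sum_i(q_iq_i^*-p_i^*p_i)_0\oplus(\tfrac12(|q_i|^2-|p_i|^2))_i$,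 $\mu_{\mathbb{C}}(p,q)=-\sum_i(q_ip_i)_0\oplus(\mathbf{i}p_iq_i)_i$ ($(\cdot)_0$ trace-free part); $X(\alpha)=(\mu_{\mathbb{R}}^{-1}(0,\alpha)\cap\mu_{\mathbb{C}}^{-1}(0,0))/K$ (similarly $X(\alpha^\pm_{i,j})$ with $n-1$ entries). $U_S(\alpha)=\{[p,q]\in X(\alpha): q_k\text{ pairwise proportional for }k\in S,\ p_k=0\ \forall k\notin S\}$. Identifying $\mathbf{i}\,\mathfrak{su}(2)\cong\mathbb{R}^3$, $D^+_{i,j}(\alpha)$ (resp. $D^-_{i,j}(\alpha)$) is the set of $[p,q]$ for which $(q_iq_i^*-p_i^*p_i)_0$ and $(q_jq_j^*-p_j^*p_j)_0$ are parallel with positive (resp. negative) inner product. *)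

theory Defs
  imports "HOL-Analysis.Analysis"
begin

text \<open>A point (p,q) is encoded by two families indexed by nat; p k is the row vector
  p_k = (a_k,b_k) and q k the column vector q_k = (c_k,d_k)^t, both stored as complex^2.
  Only the indices 1..n are used; all other entries are required to be 0.\<close>

type_synonym hpt = "(nat \<Rightarrow> complex^2) \<times> (nat \<Rightarrow> complex^2)"

definition supp_ok :: "nat \<Rightarrow> hpt \<Rightarrow> bool" where
  "supp_ok n x \<longleftrightarrow> (\<forall>k. k \<notin> {1..n} \<longrightarrow> fst x k = 0 \<and> snd x k = 0)"

definition ctransp :: "complex^2^2 \<Rightarrow> complex^2^2" where
  "ctransp A = (\<chi> r s. cnj (A$s$r))"

definition SU2 :: "(complex^2^2) set" where
  "SU2 = {A. A ** ctransp A = mat 1 \<and> det A = 1}"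

definition outer :: "complex^2 \<Rightarrow> complex^2 \<Rightarrow> complex^2^2" where
  "outer u w = (\<chi> r s. u$r * w$s)"

definition cconj :: "complex^2 \<Rightarrow> complex^2" where
  "cconj v = (\<chi> r. cnj (v$r))"

definition mtrace :: "complex^2^2 \<Rightarrow> complex" where
  "mtrace M = M$1$1 + M$2$2"

definition mscale :: "complex \<Rightarrow> complex^2^2 \<Rightarrow> complex^2^2" where
  "mscale c M = (\<chi> r s. c * M$r$s)"

definition tracefree :: "complex^2^2 \<Rightarrow> complex^2^2" where
  "tracefree M = M - mscale (mtrace M / 2) (mat 1)"

definition rowcol :: "complex^2 \<Rightarrow> complex^2 \<Rightarrow> complex" where
  "rowcol p q = (\<Sum>r\<in>UNIV. p$r * q$r)"

definition muR :: "nat \<Rightarrow> hpt \<Rightarrow> (complex^2^2) \<times> (nat \<Rightarrow> real)" where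
  "muR n x = (mscale (\<i>/2) (\<Sum>k=1..n. tracefree (outer (snd x k) (cconj (snd x k))
                                              - outer (cconj (fst x k)) (fst x k))),
              (\<lambda>k. if k \<in> {1..n} then (norm (snd x k) ^ 2 - norm (fst x k) ^ 2) / 2 else 0))"

definition muC :: "nat \<Rightarrow> hpt \<Rightarrow> (complex^2^2) \<times> (nat \<Rightarrow> complex)" where
  "muC n x = (- (\<Sum>k=1..n. tracefree (outer (snd x k) (fst x k))),
              (\<lambda>k. if k \<in> {1..n} then \<i> * rowcol (fst x k) (snd x k) else 0))"

definition level :: "nat \<Rightarrow> (nat \<Rightarrow> real) \<Rightarrow> hpt set" where
  "level n \<alpha> = {x. supp_ok n x \<and> fst (muR n x) = 0 \<and> (\<forall>k\<in>{1..n}. snd (muR n x) k = \<alpha> k)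
                   \<and> muC n x = (0, (\<lambda>_. 0))}"

definition kact :: "hpt \<Rightarrow> complex^2^2 \<Rightarrow> (nat \<Rightarrow> complex) \<Rightarrow> hpt" where
  "kact x A e = ((\<lambda>k. inverse (e k) *s (fst x k v* A)),
                (\<lambda>k. e k *s (matrix_inv A *v snd x k)))"

text \<open>K-orbit relation on the level set (the Z_2 quotient does not change orbits)\<close>
definition orbrel :: "nat \<Rightarrow> (nat \<Rightarrow> real) \<Rightarrow> (hpt \<times> hpt) set" where
  "orbrel n \<alpha> = {(x, y). x \<in> level n \<alpha> \<and> y \<in> level n \<alpha> \<and>
       (\<exists>A\<in>SU2. \<exists>e. (\<forall>k. cmod (e k) = 1) \<and> y = kact x A e)}"

text \<open>X(alpha): its elements are the K-orbits [p,q] (as sets of points)\<close>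
definition Xsp :: "nat \<Rightarrow> (nat \<Rightarrow> real) \<Rightarrow> hpt set set" where
  "Xsp n \<alpha> = level n \<alpha> // orbrel n \<alpha>"

definition hclass :: "nat \<Rightarrow> (nat \<Rightarrow> real) \<Rightarrow> hpt \<Rightarrow> hpt set" where
  "hclass n \<alpha> x = orbrel n \<alpha> `` {x}"

definition epsT :: "nat \<Rightarrow> (nat \<Rightarrow> real) \<Rightarrow> nat set \<Rightarrow> real" where
  "epsT n \<alpha> T = (\<Sum>k\<in>T. \<alpha> k) - (\<Sum>k\<in>{1..n} - T. \<alpha> k)"

definition generic :: "nat \<Rightarrow> (nat \<Rightarrow> real) \<Rightarrow> bool" where
  "generic n \<alpha> \<longleftrightarrow> (\<forall>T. T \<subseteq> {1..n} \<longrightarrow> epsT n \<alpha> T \<noteq> 0)"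

definition short :: "nat \<Rightarrow> (nat \<Rightarrow> real) \<Rightarrow> nat set \<Rightarrow> bool" where
  "short n \<alpha> T \<longleftrightarrow> T \<subseteq> {1..n} \<and> epsT n \<alpha> T < 0"

definition cprop :: "complex^2 \<Rightarrow> complex^2 \<Rightarrow> bool" where
  "cprop u w \<longleftrightarrow> (\<exists>a b. (a, b) \<noteq> (0, 0) \<and> a *s u + b *s w = 0)"

definition U :: "nat \<Rightarrow> (nat \<Rightarrow> real) \<Rightarrow> nat set \<Rightarrow> hpt set set" where
  "U n \<alpha> S = {c \<in> Xsp n \<alpha>. \<forall>x\<in>c. (\<forall>k\<in>S. \<forall>l\<in>S. cprop (snd x k) (snd x l))
                                   \<and> (\<forall>k\<in>{1..n} - S. fst x k = 0)}"

definition Hk :: "hpt \<Rightarrow> nat \<Rightarrow> complex^2^2" where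
  "Hk x k = tracefree (outer (snd x k) (cconj (snd x k)) - outer (cconj (fst x k)) (fst x k))"

text \<open>Under i su(2) = R^3, the Euclidean inner product is a positive multiple of Re tr(XY),
  and parallel means linearly dependent over R.\<close>
definition minner :: "complex^2^2 \<Rightarrow> complex^2^2 \<Rightarrow> real" where
  "minner X Y = Re (mtrace (X ** Y))"

definition rparallel :: "complex^2^2 \<Rightarrow> complex^2^2 \<Rightarrow> bool" where
  "rparallel X Y \<longleftrightarrow> (\<exists>a b::real. (a, b) \<noteq> (0, 0) \<and> mscale (of_real a) X + mscale (of_real b) Y = 0)"

definition Dplus :: "nat \<Rightarrow> (nat \<Rightarrow> real) \<Rightarrow> nat \<Rightarrow> nat \<Rightarrow> hpt set set" where
  "Dplus n \<alpha> i j = {c \<in> Xsp n \<alpha>. \<forall>x\<in>c. rparallel (Hk x i) (Hk x j) \<and> minner (Hk x i) (Hk x j) > 0}"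

definition Dminus :: "nat \<Rightarrow> (nat \<Rightarrow> real) \<Rightarrow> nat \<Rightarrow> nat \<Rightarrow> hpt set set" where
  "Dminus n \<alpha> i j = {c \<in> Xsp n \<alpha>. \<forall>x\<in>c. rparallel (Hk x i) (Hk x j) \<and> minner (Hk x i) (Hk x j) < 0}"

text \<open>skip i j m = the m-th element (m = 1..n-2) of {1..n} - {i,j} in increasing order\<close>
definition skip :: "nat \<Rightarrow> nat \<Rightarrow> nat \<Rightarrow> nat" where
  "skip i j m = (if m < min i j then m else if m + 1 < max i j then m + 1 else m + 2)"

definition alpha_pm :: "nat \<Rightarrow> (nat \<Rightarrow> real) \<Rightarrow> nat \<Rightarrow> nat \<Rightarrow> real \<Rightarrow> (nat \<Rightarrow> real)" where
  "alpha_pm n \<alpha> i j sg = (\<lambda>m. if m \<in> {1..n-2} then \<alpha> (skip i j m)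
                              else if m = n - 1 then \<alpha> i + sg * \<alpha> j else 0)"

definition smap :: "nat \<Rightarrow> (nat \<Rightarrow> real) \<Rightarrow> nat \<Rightarrow> nat \<Rightarrow> real \<Rightarrow> nat set \<Rightarrow> hpt \<Rightarrow> hpt" where
  "smap n \<alpha> i j sg S x =
     ((\<lambda>m. if m \<in> {1..card S} then fst x m else 0),
      (\<lambda>m. if m \<in> {1..n-2} then snd x (skip i j m)
           else if m = n - 1 then complex_of_real (sqrt ((\<alpha> i + sg * \<alpha> j) / \<alpha> i)) *s snd x i
           else 0))"

definition padd :: "hpt \<Rightarrow> real \<Rightarrow> hpt \<Rightarrow> hpt" where
  "padd x t v = ((\<lambda>k. fst x k + t *\<^sub>R fst v k), (\<lambda>k. snd x k + t *\<^sub>R snd v k))"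

definition hcoords :: "(hpt \<Rightarrow> real) set" where
  "hcoords = {(\<lambda>x. Re (fst x k $ r)) | k r. True} \<union> {(\<lambda>x. Im (fst x k $ r)) | k r. True}
           \<union> {(\<lambda>x. Re (snd x k $ r)) | k r. True} \<union> {(\<lambda>x. Im (snd x k $ r)) | k r. True}"

text \<open>C^infinity on an open set W: all iterated directional derivatives exist and are continuous\<close>
definition smooth_real_on :: "hpt set \<Rightarrow> (hpt \<Rightarrow> real) \<Rightarrow> bool" where
  "smooth_real_on W h \<longleftrightarrow> (\<exists>F. h \<in> F \<and> (\<forall>g\<in>F. continuous_on W g \<and>
       (\<forall>v. \<exists>g'\<in>F. \<forall>x\<in>W. ((\<lambda>t. g (padd x t v)) has_real_derivative g' x) (at 0))))"

definition smooth_hmap_on :: "hpt set \<Rightarrow> (hpt \<Rightarrow> hpt) \<Rightarrow> bool" where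
  "smooth_hmap_on W F \<longleftrightarrow> open W \<and> (\<forall>c\<in>hcoords. smooth_real_on W (c \<circ> F))"

text \<open>f : A \<rightarrow> (orbits) is smooth if it has local smooth lifts to the ambient spaces\<close>
definition qsmooth :: "hpt set set \<Rightarrow> (hpt set \<Rightarrow> hpt set) \<Rightarrow> bool" where
  "qsmooth A f \<longleftrightarrow> (\<forall>x\<in>\<Union>A. \<exists>W F. x \<in> W \<and> smooth_hmap_on W F \<and>
                        (\<forall>c\<in>A. \<forall>y\<in>c \<inter> W. F y \<in> f c))"

definition qdiffeo :: "hpt set set \<Rightarrow> hpt set set \<Rightarrow> (hpt set \<Rightarrow> hpt set) \<Rightarrow> bool" where
  "qdiffeo A B f \<longleftrightarrow> bij_betw f A B \<and> qsmooth A f \<and> qsmooth B (inv_into A f)"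

end

theory Submission
  imports Defs
begin


lemmas BF = vec_eq_iff forall_2 matrix_matrix_mult_def matrix_vector_mult_def vector_matrix_mult_def
  sum_2 ctransp_def outer_def cconj_def mtrace_def mscale_def tracefree_def mat_def rowcol_def
  vector_scalar_mult_def

lemma mat_inv_unique:
  fixes A :: "complex^2^2"
  assumes "A ** B = mat 1" shows "matrix_inv A = B"
proof -
  have BA: "B ** A = mat 1" using assms matrix_left_right_inverse by blast
  have ex: "\<exists>A'. A ** A' = mat 1 \<and> A' ** A = mat 1" using assms BA by blast
  let ?C = "matrix_inv A"
  have C: "A ** ?C = mat 1 \<and> ?C ** A = mat 1"
    unfolding matrix_inv_def by (rule someI_ex[OF ex])
  have "?C = ?C ** (A ** B)" using assms by simp
  also have "\<dots> = (?C ** A) ** B" by (simp add: matrix_mul_assoc)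
  also have "\<dots> = B" using C by simp
  finally show ?thesis .
qed

lemma SU2_inv: "A \<in> SU2 \<Longrightarrow> matrix_inv A = ctransp A"
  unfolding SU2_def by (auto intro: mat_inv_unique)

lemma SU2_left: "A \<in> SU2 \<Longrightarrow> ctransp A ** A = mat 1"
  unfolding SU2_def using matrix_left_right_inverse by blast

lemma SU2_right: "A \<in> SU2 \<Longrightarrow> A ** ctransp A = mat 1"
  unfolding SU2_def by blast

lemma ctransp_mult: "ctransp (A ** B) = ctransp B ** ctransp (A::complex^2^2)"
  by (simp add: BF algebra_simps)

lemma ctransp_ctransp: "ctransp (ctransp A) = (A::complex^2^2)"
  by (simp add: BF)

lemma ctransp_one: "ctransp (mat 1) = (mat 1::complex^2^2)"
  by (simp add: BF)

lemma det_ctransp: "det (ctransp A) = cnj (det (A::complex^2^2))"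
  by (simp add: det_2 ctransp_def)

lemma SU2_one: "mat 1 \<in> SU2"
  by (simp add: SU2_def ctransp_one det_I)

lemma SU2_ctransp: "A \<in> SU2 \<Longrightarrow> ctransp A \<in> SU2"
  by (simp add: SU2_def ctransp_ctransp det_ctransp SU2_left)

lemma SU2_mult: assumes "A \<in> SU2" "B \<in> SU2" shows "A ** B \<in> SU2"
proof -
  have "(A ** B) ** ctransp (A ** B) = A ** (B ** ctransp B) ** ctransp A"
    by (simp add: ctransp_mult matrix_mul_assoc)
  also have "\<dots> = mat 1" using assms by (simp add: SU2_right)
  finally show ?thesis using assms by (simp add: SU2_def det_mul)
qed

lemma kact_id: "kact x (mat 1) (\<lambda>_. 1) = x"
  by (simp add: kact_def SU2_inv[OF SU2_one] ctransp_one)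

lemma kact_comp:
  assumes "A \<in> SU2" "B \<in> SU2"
  shows "kact (kact x A e) B f = kact x (A ** B) (\<lambda>k. e k * f k)"
proof -
  have i: "matrix_inv A = ctransp A" "matrix_inv B = ctransp B" "matrix_inv (A ** B) = ctransp B ** ctransp A"
    using assms by (simp_all add: SU2_inv SU2_mult ctransp_mult)
  have a: "inverse (f k) *s ((inverse (e k) *s (p v* A)) v* B) = inverse (e k * f k) *s (p v* (A ** B))"
    for p k by (simp add: scalar_vector_matrix_assoc vector_smult_assoc vector_matrix_mul_assoc mult.commute)
  have b: "f k *s (ctransp B *v (e k *s (ctransp A *v q))) = (e k * f k) *s ((ctransp B ** ctransp A) *v q)"
    for q k by (simp add: vector_scalar_commute vector_smult_assoc matrix_vector_mul_assoc mult.commute)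
  show ?thesis unfolding kact_def i by (simp add: a b)
qed

lemma kact_inv:
  assumes "A \<in> SU2" "\<forall>k. cmod (e k) = 1"
  shows "kact (kact x A e) (ctransp A) (\<lambda>k. inverse (e k)) = x"
proof -
  have ne: "e k \<noteq> 0" for k using assms(2) by (metis norm_zero zero_neq_one)
  have "kact (kact x A e) (ctransp A) (\<lambda>k. inverse (e k)) = kact x (A ** ctransp A) (\<lambda>k. 1)"
    using kact_comp[OF assms(1) SU2_ctransp[OF assms(1)]] ne by simp
  also have "\<dots> = x" using assms(1) by (simp add: SU2_right kact_id)
  finally show ?thesis .
qed

lemma orbrel_iff: "(x, y) \<in> orbrel n \<alpha> \<longleftrightarrow> x \<in> level n \<alpha> \<and> y \<in> level n \<alpha> \<and>
       (\<exists>A\<in>SU2. \<exists>e. (\<forall>k. cmod (e k) = 1) \<and> y = kact x A e)"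
  by (simp add: orbrel_def)

lemma orbrel_equiv: "equiv (level n \<alpha>) (orbrel n \<alpha>)"
proof (rule equivI)
  show "orbrel n \<alpha> \<subseteq> level n \<alpha> \<times> level n \<alpha>"
    by (rule subrelI) (simp add: orbrel_iff)
  show "refl_on (level n \<alpha>) (orbrel n \<alpha>)"
    unfolding refl_on_def
  proof (intro ballI)
    fix x assume x: "x \<in> level n \<alpha>"
    have "\<exists>A\<in>SU2. \<exists>e. (\<forall>k. cmod (e k) = 1) \<and> x = kact x A e"
      using SU2_one by (intro bexI[of _ "mat 1"] exI[of _ "\<lambda>_. 1"]) (simp_all add: kact_id)
    thus "(x, x) \<in> orbrel n \<alpha>" using x by (simp only: orbrel_iff simp_thms)
  qed
  show "sym (orbrel n \<alpha>)"
  proof (rule symI)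
    fix x y assume "(x, y) \<in> orbrel n \<alpha>"
    then obtain A e where A: "A \<in> SU2" "\<forall>k. cmod (e k) = 1" "y = kact x A e"
      "x \<in> level n \<alpha>" "y \<in> level n \<alpha>" unfolding orbrel_iff by metis
    have "x = kact y (ctransp A) (\<lambda>k. inverse (e k))" using kact_inv A by simp
    moreover have "\<forall>k. cmod (inverse (e k)) = 1" using A(2) by (simp add: norm_inverse)
    moreover have "ctransp A \<in> SU2" using A SU2_ctransp by simp
    ultimately show "(y, x) \<in> orbrel n \<alpha>" unfolding orbrel_iff using A(4,5) by metis
  qed
  show "trans (orbrel n \<alpha>)"
  proof (rule transI)
    fix x y z assume xy: "(x, y) \<in> orbrel n \<alpha>" and yz: "(y, z) \<in> orbrel n \<alpha>"
    obtain A e where A: "A \<in> SU2" "\<forall>k. cmod (e k) = 1" "y = kact x A e"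
      "x \<in> level n \<alpha>" using xy unfolding orbrel_iff by metis
    obtain B f where B: "B \<in> SU2" "\<forall>k. cmod (f k) = 1" "z = kact y B f" "z \<in> level n \<alpha>"
      using yz unfolding orbrel_iff by metis
    have "z = kact x (A ** B) (\<lambda>k. e k * f k)" using A B kact_comp by simp
    moreover have "\<forall>k. cmod (e k * f k) = 1" using A B by (simp add: norm_mult)
    moreover have "A ** B \<in> SU2" using A B SU2_mult by simp
    ultimately show "(x, z) \<in> orbrel n \<alpha>" unfolding orbrel_iff using A(4) B(4) by metis
  qed
qed

lemma Xsp_class: assumes "c \<in> Xsp n \<alpha>" "x \<in> c"
  shows "c = hclass n \<alpha> x" "x \<in> level n \<alpha>"
proof -
  obtain y where y: "y \<in> level n \<alpha>" "c = orbrel n \<alpha> `` {y}"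
    using assms(1) unfolding Xsp_def by (auto elim!: quotientE)
  have yx: "(y, x) \<in> orbrel n \<alpha>" using assms(2) y by simp
  show "c = hclass n \<alpha> x" unfolding hclass_def y(2)
    by (rule equiv_class_eq[OF orbrel_equiv yx])
  show "x \<in> level n \<alpha>" using yx unfolding orbrel_iff by simp
qed

lemma hclass_self: "x \<in> level n \<alpha> \<Longrightarrow> x \<in> hclass n \<alpha> x"
  unfolding hclass_def using orbrel_equiv equiv_class_self by metis

lemma hclass_in: "x \<in> level n \<alpha> \<Longrightarrow> hclass n \<alpha> x \<in> Xsp n \<alpha>"
  unfolding hclass_def Xsp_def by (rule quotientI)

lemma hclass_mem: "y \<in> hclass n \<alpha> x \<Longrightarrow>
   y \<in> level n \<alpha> \<and> x \<in> level n \<alpha> \<and> (\<exists>A\<in>SU2. \<exists>e. (\<forall>k. cmod (e k) = 1) \<and> y = kact x A e)"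
  unfolding hclass_def orbrel_def by blast

lemma hclass_eqI: assumes "x \<in> level n \<alpha>" "y \<in> level n \<alpha>" "A \<in> SU2" "\<forall>k. cmod (e k) = 1"
   "y = kact x A e" shows "hclass n \<alpha> x = hclass n \<alpha> y"
proof -
  have "(x, y) \<in> orbrel n \<alpha>" unfolding orbrel_iff using assms by metis
  thus ?thesis unfolding hclass_def by (rule equiv_class_eq[OF orbrel_equiv])
qed




definition H :: "complex^2 \<Rightarrow> complex^2^2" where
  "H q = tracefree (outer q (cconj q))"

lemma cmod1_cnj: "cmod c = 1 \<Longrightarrow> cnj c * c = 1"
  using complex_norm_square[of c] by (simp add: mult.commute)

lemma outer_conj: "outer (ctransp A *v u) (cconj (ctransp A *v w)) = ctransp A ** outer u (cconj w) ** A"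
  by (simp add: BF algebra_simps)
lemma outer_conj2: "outer (cconj (p v* A)) (p v* A) = ctransp A ** outer (cconj p) p ** A"
  by (simp add: BF algebra_simps)

lemma outer_sc1: "outer (c *s v) (cconj (c *s w)) = mscale (c * cnj c) (outer v (cconj w))"
  by (simp add: BF algebra_simps)
lemma outer_sc2: "outer (cconj (c *s v)) (c *s w) = mscale (cnj c * c) (outer (cconj v) w)"
  by (simp add: BF algebra_simps)
lemma mscale_1: "mscale 1 M = M" by (simp add: BF)

lemma trcyc: "mtrace (X ** Y) = mtrace (Y ** (X::complex^2^2))"
  by (simp add: BF algebra_simps)

lemma conj_diff: "(V::complex^2^2) ** (M - N) ** (A::complex^2^2) = V ** M ** A - V ** N ** A"
  by (simp add: BF algebra_simps)
lemma conj_mscale: "(V::complex^2^2) ** (mscale c M) ** (A::complex^2^2) = mscale c (V ** M ** A)"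
  by (simp add: BF algebra_simps)

lemma mtrace_conj: assumes "A \<in> SU2"
  shows "mtrace (ctransp A ** M ** A) = mtrace M"
proof -
  have "mtrace (ctransp A ** M ** A) = mtrace (A ** (ctransp A ** M))" by (rule trcyc)
  also have "\<dots> = mtrace ((A ** ctransp A) ** M)" by (simp add: matrix_mul_assoc)
  also have "\<dots> = mtrace M" using assms by (simp add: SU2_right)
  finally show ?thesis .
qed

lemma tracefree_conj: assumes "A \<in> SU2"
  shows "tracefree (ctransp A ** M ** A) = ctransp A ** tracefree M ** A"
  unfolding tracefree_def conj_diff conj_mscale mtrace_conj[OF assms]
  using assms by (simp add: SU2_left)

lemma Hk_kact: assumes "A \<in> SU2" "\<forall>k. cmod (e k) = 1"
  shows "Hk (kact x A e) k = ctransp A ** Hk x k ** A"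
proof -
  have e0: "e k * cnj (e k) = 1"
    using assms(2) cmod1_cnj[of "e k"] by (simp add: mult.commute)
  have e1: "e k * cnj (e k) = 1" "inverse (cnj (e k)) * inverse (e k) = 1"
    using e0 by (simp_all add: inverse_mult_distrib[symmetric] mult.commute)
  have "Hk (kact x A e) k = tracefree (outer (ctransp A *v snd x k) (cconj (ctransp A *v snd x k))
      - outer (cconj (fst x k v* A)) (fst x k v* A))"
    unfolding Hk_def kact_def SU2_inv[OF assms(1)]
    by (simp add: outer_sc1 outer_sc2 e1 mscale_1)
  also have "\<dots> = ctransp A ** Hk x k ** A"
    unfolding outer_conj outer_conj2 conj_diff[symmetric] tracefree_conj[OF assms(1)] Hk_def ..
  finally show ?thesis .
qed

lemma conj_prod: assumes "A \<in> SU2"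
  shows "(ctransp A ** X ** A) ** (ctransp A ** Y ** A) = ctransp A ** (X ** Y) ** A"
proof -
  have "(ctransp A ** X ** A) ** (ctransp A ** Y ** A) = ctransp A ** X ** (A ** ctransp A) ** Y ** A"
    by (simp add: matrix_mul_assoc)
  thus ?thesis using assms by (simp add: SU2_right matrix_mul_assoc)
qed

lemma minner_conj: assumes "A \<in> SU2"
  shows "minner (ctransp A ** X ** A) (ctransp A ** Y ** A) = minner X Y"
  unfolding minner_def conj_prod[OF assms] mtrace_conj[OF assms] ..

lemma rparallel_conj: assumes "rparallel X Y"
  shows "rparallel (V ** X ** A) (V ** Y ** (A::complex^2^2))"
proof -
  obtain a b :: real where ab: "(a, b) \<noteq> (0, 0)" "mscale (of_real a) X + mscale (of_real b) Y = 0"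
    using assms unfolding rparallel_def by blast
  have "mscale (of_real a) (V ** X ** A) + mscale (of_real b) (V ** Y ** A)
      = V ** (mscale (of_real a) X + mscale (of_real b) Y) ** A"
    by (simp add: BF algebra_simps)
  also have "\<dots> = 0" using ab by (simp add: BF)
  finally show ?thesis unfolding rparallel_def using ab by blast
qed

lemma cprop_kact: assumes "cprop u w" "e \<noteq> 0" "f \<noteq> 0"
  shows "cprop (e *s (B *v u)) (f *s (B *v w))"
proof -
  obtain a b where ab: "(a, b) \<noteq> (0, 0)" "a *s u + b *s w = 0"
    using assms unfolding cprop_def by blast
  have "(a / e) *s (e *s (B *v u)) + (b / f) *s (f *s (B *v w)) = B *v (a *s u + b *s w)"
    using assms(2,3) by (simp add: vector_smult_assoc vector_scalar_commute matrix_vector_right_distrib)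
  also have "\<dots> = 0" using ab by simp
  finally show ?thesis unfolding cprop_def using ab assms(2,3) by (intro exI[of _ "a/e"] exI[of _ "b/f"]) auto
qed

lemma fst_kact_zero: "fst x k = 0 \<Longrightarrow> fst (kact x A e) k = 0"
  by (simp add: kact_def)

lemma snd_kact: "snd (kact x A e) k = e k *s (matrix_inv A *v snd x k)"
  by (simp add: kact_def)

lemma Hk_p0: "fst x k = 0 \<Longrightarrow> Hk x k = H (snd x k)"
  by (simp add: Hk_def H_def BF)

lemma H_scale: "H (complex_of_real r *s q) = mscale (of_real (r^2)) (H q)"
  by (simp add: H_def BF algebra_simps power2_eq_square)

definition Jv :: "complex^2 \<Rightarrow> complex^2" where
  "Jv q = (\<chi> r. if r = 1 then - cnj (q$2) else cnj (q$1))"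

lemma H_J: "H (Jv q) = mscale (-1) (H q)"
  by (simp add: H_def Jv_def BF algebra_simps) (simp add: field_simps)

lemma normsq: "(norm (q::complex^2))^2 = (cmod (q$1))^2 + (cmod (q$2))^2"
  by (simp add: norm_vec_def L2_set_def sum_2 sum_nonneg)

lemma norm_J: "norm (Jv q) = norm q"
proof -
  have "(norm (Jv q))^2 = (norm q)^2" by (simp add: normsq Jv_def)
  thus ?thesis by (simp add: power2_eq_iff_nonneg)
qed

lemma norm_ofreal_s: "norm (complex_of_real r *s (q::complex^2)) = \<bar>r\<bar> * norm q"
proof -
  have "complex_of_real r *s q = r *\<^sub>R q"
    unfolding vec_eq_iff vector_scalar_mult_def scaleR_vec_def by (simp add: scaleR_conv_of_real)
  thus ?thesis by simp
qed

lemma cmodsq: "(cmod z)^2 = (Re z)^2 + (Im z)^2"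
  by (simp add: cmod_power2)

lemma minner_HH: "minner (H q) (H q) = (norm q)^4 / 2"
proof -
  obtain a1 a2 b1 b2 where q: "q$1 = Complex a1 a2" "q$2 = Complex b1 b2"
    by (metis complex.exhaust)
  have n: "(norm q)^2 = a1^2 + a2^2 + b1^2 + b2^2"
    by (simp add: normsq q cmodsq)
  have "(norm q)^4 = ((norm q)^2)^2" by simp
  hence n4: "(norm q)^4 = (a1^2 + a2^2 + b1^2 + b2^2)^2" using n by simp
  show ?thesis unfolding n4
    by (simp add: H_def minner_def BF q power2_eq_square) (simp add: field_simps power2_eq_square)
qed

lemma mscale_eq0: "mscale c M = 0 \<longleftrightarrow> c = 0 \<or> M = (0::complex^2^2)"
  by (auto simp: BF)

lemma minner_scale: "minner X (mscale (complex_of_real t) Y) = t * minner X Y"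
proof -
  have "mtrace (X ** mscale (complex_of_real t) Y) = complex_of_real t * mtrace (X ** Y)"
    by (simp add: BF algebra_simps)
  thus ?thesis unfolding minner_def by simp
qed

lemma H_zero: assumes "H q = 0" shows "q = 0"
proof -
  have "minner (H q) (H q) = 0" using assms by (simp add: minner_def mtrace_def)
  hence "(norm q)^4 = 0" using minner_HH[of q] by simp
  thus ?thesis by simp
qed

lemma parallel_ratio: assumes "rparallel (H u) (H w)" "u \<noteq> 0"
  shows "\<exists>t. H w = mscale (complex_of_real t) (H u)"
proof -
  obtain a b :: real where ab: "(a, b) \<noteq> (0, 0)"
    "mscale (of_real a) (H u) + mscale (of_real b) (H w) = 0"
    using assms unfolding rparallel_def by blast
  have Hu: "H u \<noteq> 0" using assms(2) H_zero by blast
  have b: "b \<noteq> 0"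
  proof
    assume "b = 0"
    hence "a \<noteq> 0" using ab by simp
    moreover have "mscale (of_real a) (H u) = 0" using ab \<open>b = 0\<close> by (simp add: BF)
    ultimately show False using Hu by (simp add: mscale_eq0)
  qed
  have "H w = mscale (complex_of_real (- a / b)) (H u)"
  proof -
    have e: "complex_of_real a * H u $ r $ s + complex_of_real b * H w $ r $ s = 0" for r s
    proof -
      have "(mscale (of_real a) (H u) + mscale (of_real b) (H w)) $ r $ s = (0::complex^2^2) $ r $ s"
        using ab(2) by simp
      thus ?thesis by (simp add: mscale_def)
    qed
    have "H w $ r $ s = complex_of_real (- a / b) * H u $ r $ s" for r s
      using e[of r s] b by (simp add: field_simps) (metis add.commute add_eq_0_iff mult.commute)
    thus ?thesis by (simp add: vec_eq_iff mscale_def)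
  qed
  thus ?thesis by blast
qed

lemma ratio_norm: assumes "H w = mscale (complex_of_real t) (H u)"
  shows "(norm w)^2 = \<bar>t\<bar> * (norm u)^2"
proof -
  have "minner (H w) (H w) = t^2 * minner (H u) (H u)"
    unfolding assms minner_scale by (simp add: minner_def BF algebra_simps power2_eq_square)
  hence h: "(norm w)^4 = t^2 * (norm u)^4"
    by (simp add: minner_HH)
  hence "((norm w)^2)^2 = (\<bar>t\<bar> * (norm u)^2)^2"
    by (simp add: power_mult_distrib flip: power_mult)
  thus ?thesis by (rule power2_eq_imp_eq) simp_all
qed

lemma ratio_sign: assumes "H w = mscale (complex_of_real t) (H u)"
  shows "minner (H u) (H w) = t * (norm u)^4 / 2"
  unfolding assms minner_scale minner_HH by simp




definition unskip :: "nat \<Rightarrow> nat \<Rightarrow> nat \<Rightarrow> nat" where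
  "unskip i j k = (if k < min i j then k else if k < max i j then k - 1 else k - 2)"

lemma skip_range: "i \<noteq> j \<Longrightarrow> i \<in> {1..n} \<Longrightarrow> j \<in> {1..n} \<Longrightarrow> m \<in> {1..n-2} \<Longrightarrow>
    skip i j m \<in> {1..n} \<and> skip i j m \<noteq> i \<and> skip i j m \<noteq> j"
  unfolding skip_def min_def max_def by auto

lemma unskip_range: "i \<noteq> j \<Longrightarrow> i \<in> {1..n} \<Longrightarrow> j \<in> {1..n} \<Longrightarrow> k \<in> {1..n} \<Longrightarrow> k \<noteq> i \<Longrightarrow> k \<noteq> j \<Longrightarrow>
    unskip i j k \<in> {1..n-2}"
  unfolding unskip_def min_def max_def by auto

lemma unskip_skip: "i \<noteq> j \<Longrightarrow> 1 \<le> i \<Longrightarrow> 1 \<le> j \<Longrightarrow> unskip i j (skip i j m) = m"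
  unfolding skip_def unskip_def min_def max_def by auto

lemma skip_unskip: "i \<noteq> j \<Longrightarrow> k \<noteq> i \<Longrightarrow> k \<noteq> j \<Longrightarrow> skip i j (unskip i j k) = k"
  unfolding skip_def unskip_def min_def max_def by auto

lemma skip_small: "m < min i j \<Longrightarrow> skip i j m = m"
  unfolding skip_def by auto
lemma skip_ge: "m \<le> skip i j m"
  unfolding skip_def by auto
lemma unskip_small: "k < min i j \<Longrightarrow> unskip i j k = k"
  unfolding unskip_def by auto

lemma sum_split:
  assumes "i \<noteq> j" "i \<in> {1..n}" "j \<in> {1..n}"
  shows "(\<Sum>k=1..n. g k) = (\<Sum>m=1..n-2. g (skip i j m)) + g i + (g j :: 'a::comm_monoid_add)"
proof -
  have bij: "bij_betw (skip i j) {1..n-2} ({1..n} - {i, j})"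
  proof (rule bij_betw_byWitness[where f' = "unskip i j"])
    show "\<forall>a\<in>{1..n-2}. unskip i j (skip i j a) = a" using assms unskip_skip by auto
    show "\<forall>a'\<in>{1..n} - {i, j}. skip i j (unskip i j a') = a'" using assms skip_unskip by auto
    show "skip i j ` {1..n-2} \<subseteq> {1..n} - {i, j}"
    proof
      fix k assume "k \<in> skip i j ` {1..n-2}"
      then obtain m where "m \<in> {1..n-2}" "k = skip i j m" by blast
      thus "k \<in> {1..n} - {i, j}" using skip_range[OF assms, of m] by auto
    qed
    show "unskip i j ` ({1..n} - {i, j}) \<subseteq> {1..n-2}"
    proof
      fix m assume "m \<in> unskip i j ` ({1..n} - {i, j})"
      then obtain k where "k \<in> {1..n} - {i, j}" "m = unskip i j k" by blast
      thus "m \<in> {1..n-2}" using unskip_range[OF assms, of k] by auto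
    qed
  qed
  define R where "R = {1..n} - {i, j}"
  have Rn: "{1..n} = insert i (insert j R)" "i \<notin> insert j R" "j \<notin> R" "finite R"
    using assms unfolding R_def by auto
  have "(\<Sum>k=1..n. g k) = g i + (g j + (\<Sum>k\<in>{1..n} - {i, j}. g k))"
    unfolding Rn(1) using Rn(2-4) by (simp add: sum.insert R_def[symmetric])
  also have "(\<Sum>k\<in>{1..n} - {i, j}. g k) = (\<Sum>m=1..n-2. g (skip i j m))"
    using sum.reindex_bij_betw[OF bij, of g] by simp
  finally show ?thesis by (simp add: ac_simps)
qed

lemma sum_last:
  assumes "2 \<le> (n::nat)"
  shows "(\<Sum>m=1..n-1. g m) = (\<Sum>m=1..n-2. g m) + (g (n-1) :: 'a::comm_monoid_add)"
proof -
  have e: "{1..n-1} = insert (n-1) {1..n-2}" and ni: "n-1 \<notin> {1..n-2}" using assms by auto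
  have "(\<Sum>m=1..n-1. g m) = g (n-1) + (\<Sum>m=1..n-2. g m)"
    unfolding e by (rule sum.insert[OF finite_atLeastAtMost ni])
  thus ?thesis by (simp add: add.commute)
qed

lemma level_iff: "x \<in> level n \<alpha> \<longleftrightarrow> supp_ok n x \<and> (\<Sum>k=1..n. Hk x k) = 0 \<and>
   (\<forall>k\<in>{1..n}. (norm (snd x k)^2 - norm (fst x k)^2) / 2 = \<alpha> k) \<and>
   (\<Sum>k=1..n. tracefree (outer (snd x k) (fst x k))) = 0 \<and>
   (\<forall>k\<in>{1..n}. rowcol (fst x k) (snd x k) = 0)"
  unfolding level_def muR_def muC_def Hk_def[symmetric]
  by (auto simp: mscale_eq0 fun_eq_iff)

lemma tf_zero: "tracefree (outer q 0) = 0"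
  by (simp add: BF)

lemma rowcol_zero: "rowcol 0 q = 0"
  by (simp add: BF)

locale hsetup =
  fixes n :: nat and \<alpha> :: "nat \<Rightarrow> real" and S :: "nat set" and i j :: nat
  assumes pos: "\<forall>k\<in>{1..n}. \<alpha> k > 0"
    and S_eq: "S = {1..card S}"
    and ij: "i \<in> {1..n}" "j \<in> {1..n}" "i \<notin> S" "j \<notin> S"
    and aij: "\<alpha> i > \<alpha> j"
begin

lemma i_ne_j: "i \<noteq> j" using aij by auto

lemma cS_i: "card S < i" "card S < j"
  using ij S_eq by (metis atLeastAtMost_iff not_less)+

lemma n_ge: "card S + 2 \<le> n" "2 \<le> n"
  using cS_i ij i_ne_j by auto

lemma inS: "k \<in> S \<longleftrightarrow> 1 \<le> k \<and> k \<le> card S"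
  using S_eq by (metis atLeastAtMost_iff)

lemma ai_pos: "\<alpha> i > 0" "\<alpha> j > 0" using pos ij by auto

lemma transfer_sums:
  assumes fy: "\<forall>m\<in>{1..n-2}. fst y m = fst x (skip i j m) \<and> snd y m = snd x (skip i j m)"
    and x0: "fst x i = 0" "fst x j = 0" and y0: "fst y (n-1) = 0"
    and Hs: "H (snd x i) + H (snd x j) = H (snd y (n-1))"
  shows "(\<Sum>k=1..n. Hk x k) = (\<Sum>m=1..n-1. Hk y m)"
    and "(\<Sum>k=1..n. tracefree (outer (snd x k) (fst x k))) = (\<Sum>m=1..n-1. tracefree (outer (snd y m) (fst y m)))"
proof -
  have e1: "(\<Sum>m=1..n-2. Hk x (skip i j m)) = (\<Sum>m=1..n-2. Hk y m)"
    using fy by (intro sum.cong) (auto simp: Hk_def)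
  show "(\<Sum>k=1..n. Hk x k) = (\<Sum>m=1..n-1. Hk y m)"
    unfolding sum_split[OF i_ne_j ij(1,2)] sum_last[OF n_ge(2)] e1
    using Hs x0 y0 by (simp add: Hk_p0 add.assoc)
  have e2: "(\<Sum>m=1..n-2. tracefree (outer (snd x (skip i j m)) (fst x (skip i j m))))
      = (\<Sum>m=1..n-2. tracefree (outer (snd y m) (fst y m)))"
    using fy by (intro sum.cong) auto
  show "(\<Sum>k=1..n. tracefree (outer (snd x k) (fst x k))) = (\<Sum>m=1..n-1. tracefree (outer (snd y m) (fst y m)))"
    unfolding sum_split[OF i_ne_j ij(1,2)] sum_last[OF n_ge(2)] e2
    using x0 y0 by (simp add: tf_zero)
qed

end




lemma mscale_add_self: "X + mscale (complex_of_real t) X = mscale (complex_of_real (1 + t)) X"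
  by (simp add: BF algebra_simps)
lemma mscale_add2: "mscale (complex_of_real a) X + mscale (complex_of_real b) X = mscale (complex_of_real (a + b)) X"
  by (simp add: BF algebra_simps)
lemma mscale_one_real: "mscale (complex_of_real 1) X = X"
  by (simp add: BF)

definition qjof :: "real \<Rightarrow> real \<Rightarrow> complex^2 \<Rightarrow> complex^2" where
  "qjof sg r v = (if sg = 1 then complex_of_real r *s v else complex_of_real r *s Jv v)"

lemma H_qjof: "sg = 1 \<or> sg = -1 \<Longrightarrow> H (qjof sg r v) = mscale (complex_of_real (sg * r^2)) (H v)"
proof -
  have mm: "mscale a (mscale b M) = mscale (a * b) M" for a b and M :: "complex^2^2" by (simp add: BF)
  assume "sg = 1 \<or> sg = -1"
  thus ?thesis by (auto simp: qjof_def H_scale H_J mm)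
qed

lemma norm_qjof: "norm (qjof sg r v) = \<bar>r\<bar> * norm v"
  by (simp add: qjof_def norm_ofreal_s norm_J)

definition lift :: "nat \<Rightarrow> (nat \<Rightarrow> real) \<Rightarrow> nat \<Rightarrow> nat \<Rightarrow> real \<Rightarrow> nat set \<Rightarrow> hpt \<Rightarrow> hpt" where
  "lift n \<alpha> i j sg S y =
     ((\<lambda>k. if k \<in> {1..card S} then fst y k else 0),
      (\<lambda>k. if k = i then complex_of_real (sqrt (\<alpha> i / (\<alpha> i + sg * \<alpha> j))) *s snd y (n-1)
           else if k = j then qjof sg (sqrt (\<alpha> j / (\<alpha> i + sg * \<alpha> j))) (snd y (n-1))
           else if k \<in> {1..n} then snd y (unskip i j k) else 0))"

lemma aux_div: "a \<noteq> 0 \<Longrightarrow> (b / a) * (2 * a) = 2 * (b::real)"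
  by (simp add: field_simps)

context hsetup begin

lemma sg_pos: "sg = 1 \<or> sg = -1 \<Longrightarrow> \<alpha> i + sg * \<alpha> j > 0"
  using aij ai_pos by auto

lemma skip_cover: "k \<in> {1..n} \<Longrightarrow> k \<noteq> i \<Longrightarrow> k \<noteq> j \<Longrightarrow> unskip i j k \<in> {1..n-2} \<and> skip i j (unskip i j k) = k"
  using unskip_range[OF i_ne_j ij(1,2)] skip_unskip[OF i_ne_j] by auto

lemma skipR: "m \<in> {1..n-2} \<Longrightarrow> skip i j m \<in> {1..n} \<and> skip i j m \<noteq> i \<and> skip i j m \<noteq> j"
  using skip_range[OF i_ne_j ij(1,2)] by auto

lemma alpha_last: "alpha_pm n \<alpha> i j sg (n-1) = \<alpha> i + sg * \<alpha> j"
proof -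
  have e: "(n-1 \<in> {1..n-2}) = False" using n_ge by auto
  show ?thesis by (simp only: alpha_pm_def e if_False if_True simp_thms)
qed

lemma smap_level:
  assumes sg: "sg = 1 \<or> sg = -1" and x: "x \<in> level n \<alpha>" and p0: "\<forall>k\<in>{1..n}-S. fst x k = 0"
    and Hj: "H (snd x j) = mscale (complex_of_real (sg * \<alpha> j / \<alpha> i)) (H (snd x i))"
  shows "smap n \<alpha> i j sg S x \<in> level (n-1) (alpha_pm n \<alpha> i j sg)"
proof -
  let ?y = "smap n \<alpha> i j sg S x"
  let ?r = "sqrt ((\<alpha> i + sg * \<alpha> j) / \<alpha> i)"
  have ps: "\<alpha> i + sg * \<alpha> j > 0" using sg_pos[OF sg] .
  have L: "supp_ok n x" "(\<Sum>k=1..n. Hk x k) = 0"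
   "\<forall>k\<in>{1..n}. (norm (snd x k)^2 - norm (fst x k)^2) / 2 = \<alpha> k"
   "(\<Sum>k=1..n. tracefree (outer (snd x k) (fst x k))) = 0"
   "\<forall>k\<in>{1..n}. rowcol (fst x k) (snd x k) = 0" using x unfolding level_iff by auto
  have x0: "fst x i = 0" "fst x j = 0" using p0 ij by auto
  have fy: "\<forall>m\<in>{1..n-2}. fst ?y m = fst x (skip i j m) \<and> snd ?y m = snd x (skip i j m)"
  proof
    fix m assume m: "m \<in> {1..n-2}"
    show "fst ?y m = fst x (skip i j m) \<and> snd ?y m = snd x (skip i j m)"
    proof (cases "m \<le> card S")
      case True
      hence "skip i j m = m" using cS_i by (intro skip_small) simp
      thus ?thesis using True m by (simp add: smap_def)
    next
      case False
      hence "skip i j m \<notin> S" using skip_ge[of m i j] inS by auto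
      hence "fst x (skip i j m) = 0" using p0 skipR[OF m] by auto
      thus ?thesis using False m by (simp add: smap_def)
    qed
  qed
  have "\<not> (n-1 \<le> card S)" using n_ge by arith
  hence y0: "fst ?y (n-1) = 0" by (simp add: smap_def)
  have e: "(n-1 \<in> {1..n-2}) = False" using n_ge by auto
  have ysnd: "snd ?y (n-1) = complex_of_real ?r *s snd x i"
    by (simp only: smap_def snd_conv e if_False if_True simp_thms)
  have r2: "?r^2 = 1 + sg * \<alpha> j / \<alpha> i" using ps ai_pos by (simp add: field_simps)
  have Hs: "H (snd x i) + H (snd x j) = H (snd ?y (n-1))"
    unfolding ysnd H_scale Hj r2 mscale_add_self by simp
  note T = transfer_sums[OF fy x0 y0 Hs]
  have "(norm (snd x i)^2 - norm (fst x i)^2) / 2 = \<alpha> i" using L(3) ij by blast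
  hence nxi: "(norm (snd x i))^2 = 2 * \<alpha> i" using x0 by simp
  show ?thesis unfolding level_iff
  proof (intro conjI)
    show "supp_ok (n - 1) ?y" unfolding supp_ok_def smap_def using n_ge by auto
    show "(\<Sum>k=1..n-1. Hk ?y k) = 0" using T(1) L(2) by simp
    show "(\<Sum>k=1..n-1. tracefree (outer (snd ?y k) (fst ?y k))) = 0" using T(2) L(4) by simp
    show "\<forall>k\<in>{1..n-1}. (norm (snd ?y k)^2 - norm (fst ?y k)^2) / 2 = alpha_pm n \<alpha> i j sg k"
    proof
      fix k assume k: "k \<in> {1..n-1}"
      show "(norm (snd ?y k)^2 - norm (fst ?y k)^2) / 2 = alpha_pm n \<alpha> i j sg k"
      proof (cases "k = n-1")
        case True
        have "(norm (snd ?y k))^2 = ?r^2 * (norm (snd x i))^2"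
          unfolding True ysnd norm_ofreal_s by (simp add: power_mult_distrib)
        hence "(norm (snd ?y k))^2 = (1 + sg * \<alpha> j / \<alpha> i) * (2 * \<alpha> i)"
          using nxi r2 by simp
        also have "\<dots> = 2 * (\<alpha> i + sg * \<alpha> j)" using ai_pos by (simp add: field_simps)
        finally have B: "(norm (snd ?y k))^2 = 2 * (\<alpha> i + sg * \<alpha> j)" .
        have A: "alpha_pm n \<alpha> i j sg k = \<alpha> i + sg * \<alpha> j" unfolding True by (rule alpha_last)
        have C: "fst ?y k = 0" unfolding True by (rule y0)
        show ?thesis using A B C by simp
      next
        case False
        hence k2: "k \<in> {1..n-2}" using k by auto
        thus ?thesis using fy L(3) skipR[OF k2] by (simp add: alpha_pm_def)
      qed
    qed
    show "\<forall>k\<in>{1..n-1}. rowcol (fst ?y k) (snd ?y k) = 0"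
    proof
      fix k assume k: "k \<in> {1..n-1}"
      show "rowcol (fst ?y k) (snd ?y k) = 0"
      proof (cases "k = n-1")
        case True thus ?thesis using y0 rowcol_zero by simp
      next
        case False
        hence k2: "k \<in> {1..n-2}" using k by auto
        thus ?thesis using fy L(5) skipR[OF k2] by simp
      qed
    qed
  qed
qed

lemma lift_level:
  assumes sg: "sg = 1 \<or> sg = -1" and y: "y \<in> level (n-1) (alpha_pm n \<alpha> i j sg)"
    and p0: "\<forall>k\<in>{1..n-1}-S. fst y k = 0"
  shows "lift n \<alpha> i j sg S y \<in> level n \<alpha>"
proof -
  let ?x = "lift n \<alpha> i j sg S y"
  let ?a = "\<alpha> i + sg * \<alpha> j"
  let ?r1 = "sqrt (\<alpha> i / ?a)" and ?r2 = "sqrt (\<alpha> j / ?a)"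
  have ps: "?a > 0" using sg_pos[OF sg] .
  have L: "supp_ok (n-1) y" "(\<Sum>k=1..n-1. Hk y k) = 0"
   "\<forall>k\<in>{1..n-1}. (norm (snd y k)^2 - norm (fst y k)^2) / 2 = alpha_pm n \<alpha> i j sg k"
   "(\<Sum>k=1..n-1. tracefree (outer (snd y k) (fst y k))) = 0"
   "\<forall>k\<in>{1..n-1}. rowcol (fst y k) (snd y k) = 0" using y unfolding level_iff by blast+
  have x0: "fst ?x i = 0" "fst ?x j = 0" using cS_i by (auto simp: lift_def)
  have "\<not> (n-1 \<le> card S)" using n_ge by arith
  hence "n-1 \<notin> S" using inS by blast
  moreover have "n-1 \<in> {1..n-1}" using n_ge by simp
  ultimately have "n-1 \<in> {1..n-1} - S" by blast
  hence y0: "fst y (n-1) = 0" using p0 by blast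
  have fy: "\<forall>m\<in>{1..n-2}. fst y m = fst ?x (skip i j m) \<and> snd y m = snd ?x (skip i j m)"
  proof
    fix m assume m: "m \<in> {1..n-2}"
    have sn: "snd ?x (skip i j m) = snd y m"
      using skipR[OF m] unskip_skip[OF i_ne_j] ij by (simp add: lift_def)
    show "fst y m = fst ?x (skip i j m) \<and> snd y m = snd ?x (skip i j m)"
    proof (cases "m \<le> card S")
      case True
      hence "skip i j m = m" using cS_i by (intro skip_small) simp
      thus ?thesis using True m sn by (simp add: lift_def)
    next
      case False
      hence "m \<notin> S" using inS by blast
      moreover have "m \<in> {1..n-1}" using m by auto
      ultimately have "fst y m = 0" using p0 by blast
      moreover have "fst ?x (skip i j m) = 0" using False skip_ge[of m i j] by (simp add: lift_def)
      ultimately show ?thesis using sn by simp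
    qed
  qed
  have xi: "snd ?x i = complex_of_real ?r1 *s snd y (n-1)" by (simp add: lift_def)
  have xj: "snd ?x j = qjof sg ?r2 (snd y (n-1))" using i_ne_j by (simp add: lift_def)
  have r1: "?r1^2 = \<alpha> i / ?a" using ps ai_pos by simp
  have r2: "?r2^2 = \<alpha> j / ?a" using ps ai_pos by simp
  have Hs: "H (snd ?x i) + H (snd ?x j) = H (snd y (n-1))"
  proof -
    have "?r1^2 + sg * ?r2^2 = \<alpha> i / ?a + sg * (\<alpha> j / ?a)" unfolding r1 r2 ..
    also have "\<dots> = ?a / ?a" by (simp only: add_divide_distrib times_divide_eq_right)
    also have "\<dots> = 1" using ps by simp
    finally have "?r1^2 + sg * ?r2^2 = 1" .
    hence e: "complex_of_real (?r1^2 + sg * ?r2^2) = 1" by simp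
    show ?thesis unfolding xi xj H_scale H_qjof[OF sg] mscale_add2 e mscale_1 ..
  qed
  have fy': "\<forall>m\<in>{1..n-2}. fst y m = fst ?x (skip i j m) \<and> snd y m = snd ?x (skip i j m)"
    using fy by blast
  note T = transfer_sums[of y ?x, OF fy' x0 y0 Hs]
  have nyn: "(norm (snd y (n-1)))^2 = 2 * ?a"
  proof -
    have "n-1 \<in> {1..n-1}" using n_ge by auto
    hence "(norm (snd y (n-1))^2 - norm (fst y (n-1))^2) / 2 = alpha_pm n \<alpha> i j sg (n-1)"
      using L(3) by blast
    moreover have "alpha_pm n \<alpha> i j sg (n-1) = ?a" by (rule alpha_last)
    ultimately show ?thesis using y0 by simp
  qed
  show ?thesis unfolding level_iff
  proof (intro conjI)
    show "supp_ok n ?x" unfolding supp_ok_def lift_def using ij n_ge by auto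
    show "(\<Sum>k=1..n. Hk ?x k) = 0" using T(1) L(2) by simp
    show "(\<Sum>k=1..n. tracefree (outer (snd ?x k) (fst ?x k))) = 0" using T(2) L(4) by simp
    show "\<forall>k\<in>{1..n}. (norm (snd ?x k)^2 - norm (fst ?x k)^2) / 2 = \<alpha> k"
    proof
      fix k assume k: "k \<in> {1..n}"
      show "(norm (snd ?x k)^2 - norm (fst ?x k)^2) / 2 = \<alpha> k"
      proof (cases "k = i \<or> k = j")
        case True
        thus ?thesis
        proof
          assume ki: "k = i"
          have "(norm (snd ?x k))^2 = ?r1^2 * (norm (snd y (n-1)))^2"
            unfolding ki xi norm_ofreal_s by (simp add: power_mult_distrib)
          also have "\<dots> = (\<alpha> i / ?a) * (2 * ?a)" by (simp only: nyn r1)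
          also have "\<dots> = 2 * \<alpha> i" using ps by (intro aux_div) simp
          finally show ?thesis using ki x0 by simp
        next
          assume kj: "k = j"
          have "(norm (snd ?x k))^2 = ?r2^2 * (norm (snd y (n-1)))^2"
            unfolding kj xj norm_qjof by (simp add: power_mult_distrib)
          also have "\<dots> = (\<alpha> j / ?a) * (2 * ?a)" by (simp only: nyn r2)
          also have "\<dots> = 2 * \<alpha> j" using ps by (intro aux_div) simp
          finally show ?thesis using kj x0 by simp
        qed
      next
        case False
        then obtain m where m: "m \<in> {1..n-2}" "k = skip i j m"
          using skip_cover[OF k] by metis
        have "m \<in> {1..n-1}" using m by auto
        hence "(norm (snd y m)^2 - norm (fst y m)^2) / 2 = alpha_pm n \<alpha> i j sg m" using L(3) by blast
        moreover have "alpha_pm n \<alpha> i j sg m = \<alpha> k" using m by (simp add: alpha_pm_def)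
        ultimately show ?thesis using fy m by simp
      qed
    qed
    show "\<forall>k\<in>{1..n}. rowcol (fst ?x k) (snd ?x k) = 0"
    proof
      fix k assume k: "k \<in> {1..n}"
      show "rowcol (fst ?x k) (snd ?x k) = 0"
      proof (cases "k = i \<or> k = j")
        case True thus ?thesis using x0 rowcol_zero by auto
      next
        case False
        then obtain m where m: "m \<in> {1..n-2}" "k = skip i j m"
          using skip_cover[OF k] by metis
        have "m \<in> {1..n-1}" using m by auto
        hence "rowcol (fst y m) (snd y m) = 0" using L(5) by blast
        thus ?thesis using fy m by simp
      qed
    qed
  qed
qed

end



lemma cnj_mult_self: "cnj z * z = complex_of_real ((cmod z)^2)"
proof -
  have "z * cnj z = complex_of_real ((cmod z)^2)" by (rule complex_norm_square[symmetric])
  thus ?thesis by (simp only: mult.commute)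
qed

lemma H11: "2 * H q $ 1 $ 1 = q$1 * cnj (q$1) - q$2 * cnj (q$2)"
  by (simp add: H_def BF algebra_simps)
lemma H12: "H q $ 1 $ 2 = q$1 * cnj (q$2)"
  by (simp add: H_def BF algebra_simps)

lemma H_phase: assumes "H u = H w"
  shows "\<exists>ph. cmod ph = 1 \<and> u = ph *s w"
proof -
  define u1 u2 w1 w2 where "u1 = u$1" "u2 = u$2" "w1 = w$1" "w2 = w$2"
  have "H u $ 1 $ 2 = H w $ 1 $ 2" "H u $ 1 $ 1 = H w $ 1 $ 1" using assms by simp_all
  hence e1: "u1 * cnj u2 = w1 * cnj w2" and e2: "u1 * cnj u1 - u2 * cnj u2 = w1 * cnj w1 - w2 * cnj w2"
    unfolding u1_u2_w1_w2_def by (simp_all only: H12 H11[symmetric])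
  have "minner (H u) (H u) = minner (H w) (H w)" using assms by simp
  hence "(norm u)^4 = (norm w)^4" by (simp add: minner_HH)
  hence "norm u = norm w" by (simp add: power_eq_iff_eq_base)
  hence "(cmod u1)^2 + (cmod u2)^2 = (cmod w1)^2 + (cmod w2)^2"
    unfolding u1_u2_w1_w2_def by (metis normsq)
  moreover have "(cmod u1)^2 - (cmod u2)^2 = (cmod w1)^2 - (cmod w2)^2"
  proof -
    have "complex_of_real ((cmod u1)^2 - (cmod u2)^2) = u1 * cnj u1 - u2 * cnj u2"
      by (simp only: of_real_diff complex_norm_square)
    also have "\<dots> = w1 * cnj w1 - w2 * cnj w2" by (rule e2)
    also have "\<dots> = complex_of_real ((cmod w1)^2 - (cmod w2)^2)"
      by (simp only: of_real_diff complex_norm_square)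
    finally have "complex_of_real ((cmod u1)^2 - (cmod u2)^2) = complex_of_real ((cmod w1)^2 - (cmod w2)^2)" .
    thus ?thesis using of_real_eq_iff by blast
  qed
  ultimately have "(cmod u1)^2 = (cmod w1)^2" "(cmod u2)^2 = (cmod w2)^2" by linarith+
  hence c1: "cmod u1 = cmod w1" and c2: "cmod u2 = cmod w2" by (simp_all add: power2_eq_iff_nonneg)
  have s1: "cnj u1 * u1 = cnj w1 * w1" using c1 by (simp add: cnj_mult_self)
  show ?thesis
  proof (cases "w1 = 0")
    case False
    hence u1: "u1 \<noteq> 0" using c1 by auto
    define ph where "ph = u1 / w1"
    have "cmod ph = 1" unfolding ph_def using c1 False by (simp add: norm_divide)
    moreover have "u1 = ph * w1" unfolding ph_def using False by simp
    moreover have "u2 = ph * w2"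
    proof -
      have "cnj u1 * u2 = cnj w1 * w2" using arg_cong[OF e1, of cnj] by (simp add: mult.commute)
      moreover have "cnj u1 * (ph * w2) = cnj w1 * w2"
      proof -
        have "cnj u1 * (ph * w2) = (cnj u1 * u1) / w1 * w2" unfolding ph_def by (simp add: field_simps)
        also have "\<dots> = cnj w1 * w2" unfolding s1 using False by (simp add: field_simps)
        finally show ?thesis .
      qed
      ultimately show ?thesis using u1 by (metis complex_cnj_zero_iff mult_cancel_left)
    qed
    ultimately show ?thesis unfolding u1_u2_w1_w2_def
      by (intro exI[of _ ph]) (simp add: vec_eq_iff forall_2 vector_scalar_mult_def)
  next
    case True
    hence u1: "u1 = 0" using c1 by simp
    show ?thesis
    proof (cases "w2 = 0")
      case True
      hence "u2 = 0" using c2 by simp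
      thus ?thesis using u1 True \<open>w1 = 0\<close> unfolding u1_u2_w1_w2_def
        by (intro exI[of _ 1]) (simp add: vec_eq_iff forall_2 vector_scalar_mult_def)
    next
      case False
      define ph where "ph = u2 / w2"
      have "cmod ph = 1" unfolding ph_def using c2 False by (simp add: norm_divide)
      moreover have "u2 = ph * w2" unfolding ph_def using False by simp
      ultimately show ?thesis using u1 \<open>w1 = 0\<close> unfolding u1_u2_w1_w2_def
        by (intro exI[of _ ph]) (simp add: vec_eq_iff forall_2 vector_scalar_mult_def)
    qed
  qed
qed

lemma H_unit: assumes "A \<in> SU2" "cmod c = 1"
  shows "H (c *s (ctransp A *v q)) = ctransp A ** H q ** A"
proof -
  have "c * cnj c = 1" using cmod1_cnj[OF assms(2)] by (simp add: mult.commute)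
  thus ?thesis unfolding H_def outer_sc1 by (simp add: mscale_1 outer_conj tracefree_conj[OF assms(1)])
qed


definition Ucond :: "nat \<Rightarrow> nat set \<Rightarrow> hpt \<Rightarrow> bool" where
  "Ucond N S x \<longleftrightarrow> (\<forall>k\<in>S. \<forall>l\<in>S. cprop (snd x k) (snd x l)) \<and> (\<forall>k\<in>{1..N} - S. fst x k = 0)"

definition Dcond :: "nat \<Rightarrow> nat \<Rightarrow> real \<Rightarrow> hpt \<Rightarrow> bool" where
  "Dcond i j sg x \<longleftrightarrow> rparallel (Hk x i) (Hk x j) \<and> sg * minner (Hk x i) (Hk x j) > 0"

definition DD :: "nat \<Rightarrow> (nat \<Rightarrow> real) \<Rightarrow> nat \<Rightarrow> nat \<Rightarrow> real \<Rightarrow> hpt set set" where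
  "DD n \<alpha> i j sg = {c \<in> Xsp n \<alpha>. \<forall>x\<in>c. Dcond i j sg x}"

lemma U_eq: "U N \<alpha> S = {c \<in> Xsp N \<alpha>. \<forall>x\<in>c. Ucond N S x}"
  unfolding U_def Ucond_def ..

lemma Dplus_eq: "Dplus n \<alpha> i j = DD n \<alpha> i j 1"
  unfolding Dplus_def DD_def Dcond_def by simp

lemma Dminus_eq: "Dminus n \<alpha> i j = DD n \<alpha> i j (-1)"
  unfolding Dminus_def DD_def Dcond_def by simp

lemma e_ne0: "\<forall>k. cmod (e k) = 1 \<Longrightarrow> e k \<noteq> 0"
  by (metis norm_zero zero_neq_one)

lemma Ucond_kact: assumes "Ucond N S x" "A \<in> SU2" "\<forall>k. cmod (e k) = 1"
  shows "Ucond N S (kact x A e)"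
  unfolding Ucond_def snd_kact
  using assms cprop_kact e_ne0[OF assms(3)] fst_kact_zero unfolding Ucond_def by blast

lemma Dcond_kact: assumes "Dcond i j sg x" "A \<in> SU2" "\<forall>k. cmod (e k) = 1"
  shows "Dcond i j sg (kact x A e)"
  using assms unfolding Dcond_def Hk_kact[OF assms(2,3)] minner_conj[OF assms(2)]
  by (simp add: rparallel_conj)

lemma class_in_U: assumes "x \<in> level N \<alpha>" "Ucond N S x"
  shows "hclass N \<alpha> x \<in> U N \<alpha> S"
  unfolding U_eq using assms hclass_in hclass_mem Ucond_kact by blast

lemma class_in_DD: assumes "x \<in> level n \<alpha>" "Dcond i j sg x"
  shows "hclass n \<alpha> x \<in> DD n \<alpha> i j sg"
  unfolding DD_def using assms hclass_in hclass_mem Dcond_kact by blast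

lemma minner_scale_l: "minner (mscale (complex_of_real t) X) Y = t * minner X Y"
proof -
  have "mtrace (mscale (complex_of_real t) X ** Y) = complex_of_real t * mtrace (X ** Y)"
    by (simp add: BF algebra_simps)
  thus ?thesis unfolding minner_def by simp
qed

context hsetup begin

lemma key_ratio:
  assumes sg: "sg = 1 \<or> sg = -1" and x: "x \<in> level n \<alpha>" and U: "Ucond n S x"
    and D: "Dcond i j sg x"
  shows "fst x i = 0" "fst x j = 0"
    "H (snd x j) = mscale (complex_of_real (sg * \<alpha> j / \<alpha> i)) (H (snd x i))"
proof -
  show x0: "fst x i = 0" "fst x j = 0" using U ij unfolding Ucond_def by auto
  have L: "\<forall>k\<in>{1..n}. (norm (snd x k)^2 - norm (fst x k)^2) / 2 = \<alpha> k"
    using x unfolding level_iff by blast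
  have "(norm (snd x i)^2 - norm (fst x i)^2) / 2 = \<alpha> i" using L ij by blast
  hence ni: "(norm (snd x i))^2 = 2 * \<alpha> i" using x0 by simp
  have "(norm (snd x j)^2 - norm (fst x j)^2) / 2 = \<alpha> j" using L ij by blast
  hence nj: "(norm (snd x j))^2 = 2 * \<alpha> j" using x0 by simp
  have qi: "snd x i \<noteq> 0" using ni ai_pos by auto
  have D': "rparallel (H (snd x i)) (H (snd x j))" "sg * minner (H (snd x i)) (H (snd x j)) > 0"
    using D x0 unfolding Dcond_def by (simp_all add: Hk_p0)
  obtain t where t: "H (snd x j) = mscale (complex_of_real t) (H (snd x i))"
    using parallel_ratio[OF D'(1) qi] by blast
  have "2 * \<alpha> j = \<bar>t\<bar> * (2 * \<alpha> i)" using ratio_norm[OF t] ni nj by simp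
  hence at: "\<bar>t\<bar> = \<alpha> j / \<alpha> i" using ai_pos by (simp add: field_simps)
  have "sg * (t * (norm (snd x i))^4 / 2) > 0" using D'(2) ratio_sign[OF t] by simp
  moreover have "(norm (snd x i))^4 > 0" using qi by simp
  moreover have "sg * (t * (norm (snd x i))^4 / 2) = (sg * t) * ((norm (snd x i))^4 / 2)" by simp
  ultimately have a: "(sg * t) * ((norm (snd x i))^4 / 2) > 0" "(norm (snd x i))^4 / 2 > 0" by simp_all
  have "sg * t > 0" by (rule zero_less_mult_pos2[OF a(1) a(2)])
  hence "t = sg * \<bar>t\<bar>" using sg by auto
  hence "t = sg * \<alpha> j / \<alpha> i" using at by simp
  thus "H (snd x j) = mscale (complex_of_real (sg * \<alpha> j / \<alpha> i)) (H (snd x i))" using t by simp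
qed

lemma smap_Ucond: assumes "Ucond n S x" shows "Ucond (n-1) S (smap n \<alpha> i j sg S x)"
proof -
  have s: "snd (smap n \<alpha> i j sg S x) k = snd x k" if "k \<in> S" for k
  proof -
    have k: "1 \<le> k" "k \<le> card S" using that inS by blast+
    hence "k \<in> {1..n-2}" using n_ge by auto
    moreover have "skip i j k = k" using k cS_i by (intro skip_small) simp
    ultimately show ?thesis by (simp add: smap_def)
  qed
  have f: "fst (smap n \<alpha> i j sg S x) k = 0" if "k \<in> {1..n-1} - S" for k
  proof -
    have "k \<notin> S" using that by blast
    hence "k \<notin> {1..card S}" using inS atLeastAtMost_iff by blast
    thus ?thesis unfolding smap_def fst_conv by (simp only: if_False)
  qed
  show ?thesis using assms s f unfolding Ucond_def by simp
qed

definition eprime :: "(nat \<Rightarrow> complex) \<Rightarrow> nat \<Rightarrow> complex" where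
  "eprime e m = (if m \<in> {1..n-2} then e (skip i j m) else e i)"

lemma smap_kact: "smap n \<alpha> i j sg S (kact x A e) = kact (smap n \<alpha> i j sg S x) A (eprime e)"
proof -
  have f: "fst (smap n \<alpha> i j sg S (kact x A e)) m = fst (kact (smap n \<alpha> i j sg S x) A (eprime e)) m" for m
  proof (cases "m \<in> {1..card S}")
    case True
    hence "m \<in> {1..n-2}" "skip i j m = m" using n_ge cS_i by (auto intro: skip_small)
    thus ?thesis using True by (simp add: smap_def kact_def eprime_def)
  next
    case False thus ?thesis unfolding smap_def kact_def fst_conv by (simp only: if_False) simp
  qed
  have s: "snd (smap n \<alpha> i j sg S (kact x A e)) m = snd (kact (smap n \<alpha> i j sg S x) A (eprime e)) m" for m
  proof (cases "m \<in> {1..n-2}")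
    case True thus ?thesis by (simp add: smap_def kact_def eprime_def)
  next
    case False
    show ?thesis
    proof (cases "m = n - 1")
      case True
      have mm: "(n - 1 \<in> {1..n-2}) = False" using n_ge by auto
      show ?thesis unfolding True smap_def kact_def eprime_def snd_conv mm if_False if_True simp_thms
        by (simp add: vector_scalar_commute vector_smult_assoc mult.commute)
    next
      case False2: False
      have mm: "(m \<in> {1..n-2}) = False" "(m = n - 1) = False" using False False2 by auto
      show ?thesis unfolding smap_def kact_def snd_conv mm if_False by simp
    qed
  qed
  show ?thesis using f s by (simp add: prod_eq_iff fun_eq_iff)
qed

lemma eprime_norm: "\<forall>k. cmod (e k) = 1 \<Longrightarrow> \<forall>k. cmod (eprime e k) = 1"
  by (simp add: eprime_def)

end





lemma mscale_lin2: "mscale (complex_of_real a) (mscale (complex_of_real c) X) + mscale (complex_of_real b) (mscale (complex_of_real d) X)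
   = mscale (complex_of_real (a * c + b * d)) X"
  by (simp add: BF algebra_simps)

lemma vec_cancel: "(c::complex) \<noteq> 0 \<Longrightarrow> c *s u = c *s w \<Longrightarrow> u = w"
  by (metis vector_mul_lcancel)

context hsetup begin

lemma lift_snd_S: "k \<in> S \<Longrightarrow> snd (lift n \<alpha> i j sg S y) k = snd y k"
proof -
  assume "k \<in> S"
  hence k: "1 \<le> k" "k \<le> card S" using inS by blast+
  hence "k \<noteq> i" "k \<noteq> j" "k \<in> {1..n}" "unskip i j k = k" using cS_i n_ge
    by (auto intro: unskip_small)
  thus ?thesis by (simp add: lift_def)
qed

lemma lift_Ucond: assumes "Ucond (n-1) S y" shows "Ucond n S (lift n \<alpha> i j sg S y)"
proof -
  have f: "fst (lift n \<alpha> i j sg S y) k = 0" if "k \<in> {1..n} - S" for k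
  proof -
    have "k \<notin> S" using that by blast
    hence "k \<notin> {1..card S}" using inS atLeastAtMost_iff by blast
    thus ?thesis unfolding lift_def fst_conv by (simp only: if_False)
  qed
  show ?thesis using assms f lift_snd_S unfolding Ucond_def by simp
qed

lemma y_last0: assumes "Ucond (n-1) S y" shows "fst y (n-1) = 0"
proof -
  have "\<not> (n-1 \<le> card S)" using n_ge by arith
  hence "n-1 \<notin> S" using inS by blast
  moreover have "n-1 \<in> {1..n-1}" using n_ge by simp
  ultimately have "n-1 \<in> {1..n-1} - S" by blast
  thus ?thesis using assms unfolding Ucond_def by blast
qed

lemma lift_Dcond:
  assumes sg: "sg = 1 \<or> sg = -1" and y: "y \<in> level (n-1) (alpha_pm n \<alpha> i j sg)"
    and U: "Ucond (n-1) S y"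
  shows "Dcond i j sg (lift n \<alpha> i j sg S y)"
proof -
  let ?x = "lift n \<alpha> i j sg S y"
  let ?a = "\<alpha> i + sg * \<alpha> j"
  let ?r1 = "sqrt (\<alpha> i / ?a)" and ?r2 = "sqrt (\<alpha> j / ?a)"
  let ?v = "snd y (n-1)"
  have ps: "?a > 0" using sg_pos[OF sg] .
  have x0: "fst ?x i = 0" "fst ?x j = 0" using cS_i by (auto simp: lift_def)
  have xi: "snd ?x i = complex_of_real ?r1 *s ?v" by (simp add: lift_def)
  have xj: "snd ?x j = qjof sg ?r2 ?v" using i_ne_j by (simp add: lift_def)
  have Hi: "Hk ?x i = mscale (complex_of_real (?r1^2)) (H ?v)"
    using x0 by (simp add: Hk_p0 xi H_scale)
  have Hj: "Hk ?x j = mscale (complex_of_real (sg * ?r2^2)) (H ?v)"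
    using x0 by (simp add: Hk_p0 xj H_qjof[OF sg])
  have r1: "?r1^2 > 0" "?r2^2 > 0" using ps ai_pos by simp_all
  have y0: "fst y (n-1) = 0" using y_last0[OF U] .
  have "(norm ?v)^2 = 2 * ?a"
  proof -
    have L: "\<forall>k\<in>{1..n-1}. (norm (snd y k)^2 - norm (fst y k)^2) / 2 = alpha_pm n \<alpha> i j sg k"
      using y unfolding level_iff by blast
    have "n-1 \<in> {1..n-1}" using n_ge by auto
    hence "(norm (snd y (n-1))^2 - norm (fst y (n-1))^2) / 2 = alpha_pm n \<alpha> i j sg (n-1)"
      using L by blast
    thus ?thesis using y0 alpha_last by simp
  qed
  hence v: "?v \<noteq> 0" using ps by auto
  have par: "rparallel (Hk ?x i) (Hk ?x j)"
    unfolding rparallel_def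
  proof (intro exI conjI)
    show "(sg * ?r2^2, - (?r1^2)) \<noteq> (0, 0)" using r1 by simp
    show "mscale (complex_of_real (sg * ?r2^2)) (Hk ?x i) + mscale (complex_of_real (- (?r1^2))) (Hk ?x j) = 0"
      unfolding Hi Hj mscale_lin2 by (simp add: BF)
  qed
  have "minner (Hk ?x i) (Hk ?x j) = ?r1^2 * (sg * ?r2^2) * ((norm ?v)^4 / 2)"
    unfolding Hi Hj minner_scale minner_scale_l minner_HH by simp
  hence "sg * minner (Hk ?x i) (Hk ?x j) = (sg * sg) * (?r1^2 * ?r2^2 * ((norm ?v)^4 / 2))"
    by (simp add: algebra_simps)
  also have "sg * sg = 1" using sg by auto
  finally have "sg * minner (Hk ?x i) (Hk ?x j) = ?r1^2 * ?r2^2 * ((norm ?v)^4 / 2)" by simp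
  moreover have "?r1^2 * ?r2^2 * ((norm ?v)^4 / 2) > 0" using r1 v by simp
  ultimately show ?thesis unfolding Dcond_def using par by simp
qed

lemma smap_lift:
  assumes sg: "sg = 1 \<or> sg = -1" and U: "Ucond (n-1) S y" and sp: "supp_ok (n-1) y"
  shows "smap n \<alpha> i j sg S (lift n \<alpha> i j sg S y) = y"
proof -
  let ?x = "lift n \<alpha> i j sg S y"
  let ?a = "\<alpha> i + sg * \<alpha> j"
  have ps: "?a > 0" using sg_pos[OF sg] .
  have f: "fst (smap n \<alpha> i j sg S ?x) m = fst y m" for m
  proof (cases "m \<in> {1..card S}")
    case True thus ?thesis by (simp add: smap_def lift_def)
  next
    case False
    hence mS: "m \<notin> S" using inS atLeastAtMost_iff by blast
    have "fst y m = 0"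
    proof (cases "m \<in> {1..n-1}")
      case True thus ?thesis using mS U unfolding Ucond_def by blast
    next
      case False thus ?thesis using sp unfolding supp_ok_def by blast
    qed
    thus ?thesis using False unfolding smap_def fst_conv by (simp only: if_False)
  qed
  have s: "snd (smap n \<alpha> i j sg S ?x) m = snd y m" for m
  proof (cases "m \<in> {1..n-2}")
    case True
    have "skip i j m \<in> {1..n}" "skip i j m \<noteq> i" "skip i j m \<noteq> j" using skipR[OF True] by auto
    moreover have "unskip i j (skip i j m) = m" using unskip_skip[OF i_ne_j] ij by auto
    ultimately show ?thesis using True by (simp add: smap_def lift_def)
  next
    case False
    show ?thesis
    proof (cases "m = n - 1")
      case True
      have mm: "(n - 1 \<in> {1..n-2}) = False" using n_ge by auto
      have "sqrt (?a / \<alpha> i) * sqrt (\<alpha> i / ?a) = 1"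
        using ps ai_pos by (simp add: real_sqrt_mult[symmetric])
      hence "complex_of_real (sqrt (?a / \<alpha> i)) * complex_of_real (sqrt (\<alpha> i / ?a)) = 1"
        by (simp only: of_real_mult[symmetric]) simp
      thus ?thesis unfolding True smap_def snd_conv mm if_False if_True simp_thms
        by (simp add: lift_def vector_smult_assoc)
    next
      case False2: False
      have mm: "(m \<in> {1..n-2}) = False" "(m = n - 1) = False" using False False2 by auto
      have "m \<notin> {1..n-1}" using False False2 by auto
      hence "snd y m = 0" using sp unfolding supp_ok_def by blast
      thus ?thesis unfolding smap_def snd_conv mm if_False by simp
    qed
  qed
  show ?thesis using f s by (simp add: prod_eq_iff fun_eq_iff)
qed

end



context hsetup begin

lemma smap_last: "snd (smap n \<alpha> i j sg S x) (n-1) = complex_of_real (sqrt ((\<alpha> i + sg * \<alpha> j) / \<alpha> i)) *s snd x i"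
proof -
  have e: "(n-1 \<in> {1..n-2}) = False" using n_ge by auto
  show ?thesis by (simp only: smap_def snd_conv e if_False if_True simp_thms)
qed

lemma smap_mid: "m \<in> {1..n-2} \<Longrightarrow> snd (smap n \<alpha> i j sg S x) m = snd x (skip i j m)"
  by (simp add: smap_def)

lemma smap_fstS: "m \<in> {1..card S} \<Longrightarrow> fst (smap n \<alpha> i j sg S x) m = fst x m"
  by (simp add: smap_def)

lemma smap_inj:
  assumes sg: "sg = 1 \<or> sg = -1" and x1: "x1 \<in> level n \<alpha>" and x2: "x2 \<in> level n \<alpha>"
    and U1: "Ucond n S x1" and U2: "Ucond n S x2" and D1: "Dcond i j sg x1" and D2: "Dcond i j sg x2"
    and eq: "smap n \<alpha> i j sg S x2 \<in> hclass (n-1) (alpha_pm n \<alpha> i j sg) (smap n \<alpha> i j sg S x1)"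
  shows "hclass n \<alpha> x1 = hclass n \<alpha> x2"
proof -
  let ?s = "smap n \<alpha> i j sg S"
  obtain A e' where A: "A \<in> SU2" "\<forall>k. cmod (e' k) = 1" "?s x2 = kact (?s x1) A e'"
    using hclass_mem[OF eq] by blast
  let ?B = "ctransp A"
  have Binv: "matrix_inv A = ?B" using SU2_inv[OF A(1)] .
  have sm: "snd (?s x2) m = e' m *s (?B *v snd (?s x1) m)" for m
    using arg_cong[OF A(3), of "\<lambda>z. snd z m"] by (simp add: kact_def Binv)
  have fm: "fst (?s x2) m = inverse (e' m) *s (fst (?s x1) m v* A)" for m
    using arg_cong[OF A(3), of "\<lambda>z. fst z m"] by (simp add: kact_def)
  note K1 = key_ratio[OF sg x1 U1 D1] and K2 = key_ratio[OF sg x2 U2 D2]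
  let ?r = "sqrt ((\<alpha> i + sg * \<alpha> j) / \<alpha> i)"
  have rne: "complex_of_real ?r \<noteq> 0" using sg_pos[OF sg] ai_pos by simp
  have qi: "snd x2 i = e' (n-1) *s (?B *v snd x1 i)"
  proof -
    have "complex_of_real ?r *s snd x2 i = complex_of_real ?r *s (e' (n-1) *s (?B *v snd x1 i))"
      using sm[of "n-1"] unfolding smap_last
      by (simp add: vector_scalar_commute vector_smult_assoc mult.commute)
    thus ?thesis using vec_cancel[OF rne] by blast
  qed
  have "H (snd x2 j) = H (1 *s (?B *v snd x1 j))"
  proof -
    have "H (snd x2 j) = mscale (complex_of_real (sg * \<alpha> j / \<alpha> i)) (?B ** H (snd x1 i) ** A)"
      unfolding K2(3) qi H_unit[OF A(1) A(2)[rule_format]] ..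
    also have "\<dots> = ?B ** H (snd x1 j) ** A" unfolding K1(3) conj_mscale ..
    also have "\<dots> = H (1 *s (?B *v snd x1 j))" using H_unit[OF A(1), of 1] by simp
    finally show ?thesis .
  qed
  then obtain ph where ph: "cmod ph = 1" "snd x2 j = ph *s (?B *v snd x1 j)"
    using H_phase by (metis vector_smult_lid)
  define e where "e k = (if k = i then e' (n-1) else if k = j then ph
                         else if k \<in> {1..n} then e' (unskip i j k) else 1)" for k
  have en: "\<forall>k. cmod (e k) = 1" using A(2) ph(1) by (simp add: e_def)
  have sp1: "supp_ok n x1" and sp2: "supp_ok n x2" using x1 x2 unfolding level_iff by blast+
  have F: "fst x2 k = inverse (e k) *s (fst x1 k v* A)" for k
  proof (cases "k \<in> {1..card S}")
    case True
    hence k: "k \<le> card S" "1 \<le> k" by auto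
    hence "k \<noteq> i" "k \<noteq> j" "k \<in> {1..n}" "unskip i j k = k" using cS_i n_ge
      by (auto intro: unskip_small)
    hence ek: "e k = e' k" by (simp add: e_def)
    show ?thesis using fm[of k] by (simp add: smap_fstS[OF True] ek)
  next
    case False
    hence kS: "k \<notin> S" using inS atLeastAtMost_iff by blast
    have "fst x1 k = 0 \<and> fst x2 k = 0"
    proof (cases "k \<in> {1..n}")
      case True thus ?thesis using kS U1 U2 unfolding Ucond_def by blast
    next
      case False thus ?thesis using sp1 sp2 unfolding supp_ok_def by blast
    qed
    thus ?thesis by simp
  qed
  have Sn: "snd x2 k = e k *s (?B *v snd x1 k)" for k
  proof (cases "k = i")
    case True thus ?thesis using qi by (simp add: e_def)
  next
    case ni: False
    show ?thesis
    proof (cases "k = j")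
      case True thus ?thesis using ph(2) i_ne_j by (simp add: e_def)
    next
      case nj: False
      show ?thesis
      proof (cases "k \<in> {1..n}")
        case True
        obtain m where m: "m \<in> {1..n-2}" "skip i j m = k" "unskip i j k = m"
          using skip_cover[OF True ni nj] by blast
        have ek: "e k = e' m" using ni nj True m by (simp add: e_def)
        show ?thesis using sm[of m] unfolding smap_mid[OF m(1)] m(2) ek .
      next
        case False
        hence "snd x1 k = 0" "snd x2 k = 0" using sp1 sp2 unfolding supp_ok_def by blast+
        thus ?thesis by simp
      qed
    qed
  qed
  have "x2 = kact x1 A e"
    unfolding kact_def Binv using F Sn by (simp add: prod_eq_iff fun_eq_iff)
  thus ?thesis using hclass_eqI[OF x1 x2 A(1) en] by simp
qed

end




lemma cont_if: "(P \<Longrightarrow> continuous_on S f) \<Longrightarrow> (\<not> P \<Longrightarrow> continuous_on S g) \<Longrightarrow>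
   continuous_on S (\<lambda>x. if P then f x else g x)"
  by (cases P) auto

lemma cont_fstk: "continuous_on S (\<lambda>x::hpt. fst x k)"
  by (rule continuous_on_product_then_coordinatewise[OF continuous_on_fst[OF continuous_on_id]])
lemma cont_sndk: "continuous_on S (\<lambda>x::hpt. snd x k)"
  by (rule continuous_on_product_then_coordinatewise[OF continuous_on_snd[OF continuous_on_id]])

lemma cont_scal: "continuous_on S f \<Longrightarrow> continuous_on S (\<lambda>x. c *s (f x :: complex^2))"
  unfolding vector_scalar_mult_def
  by (intro continuous_on_vec_lambda continuous_on_mult continuous_on_const continuous_on_component)

lemma cont_J: "continuous_on S f \<Longrightarrow> continuous_on S (\<lambda>x. Jv (f x))"
  unfolding Jv_def
  by (intro continuous_on_vec_lambda cont_if continuous_on_minus continuous_on_cnj continuous_on_component)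

lemma smooth_lin_map:
  assumes cont: "continuous_on UNIV F" and lin: "\<And>x t v. F (padd x t v) = padd (F x) t (F v)"
  shows "smooth_hmap_on UNIV F"
  unfolding smooth_hmap_on_def
proof (intro conjI ballI)
  show "open (UNIV :: hpt set)" by simp
  fix c assume c: "c \<in> hcoords"
  have cl: "c (padd y t w) = c y + t * c w" for y t w
    using c unfolding hcoords_def padd_def by auto
  have cc: "continuous_on UNIV c"
    using c unfolding hcoords_def
    by (auto intro!: continuous_on_Re continuous_on_Im continuous_on_component cont_fstk cont_sndk)
  let ?h = "c \<circ> F"
  have hl: "?h (padd x t v) = ?h x + t * ?h v" for x t v by (simp add: lin cl)
  have hc: "continuous_on UNIV ?h" by (rule continuous_on_compose[OF cont continuous_on_subset[OF cc]]) simp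
  show "smooth_real_on UNIV ?h"
    unfolding smooth_real_on_def
  proof (intro exI[of _ "insert ?h (range (\<lambda>r. \<lambda>_. r))"] conjI ballI allI)
    show "?h \<in> insert ?h (range (\<lambda>r. \<lambda>_. r))" by simp
    fix g assume g: "g \<in> insert ?h (range (\<lambda>r. \<lambda>_. r))"
    show "continuous_on UNIV g" using g hc by auto
    fix v
    show "\<exists>g'\<in>insert ?h (range (\<lambda>r. \<lambda>_. r)). \<forall>x\<in>UNIV. ((\<lambda>t. g (padd x t v)) has_real_derivative g' x) (at 0)"
    proof (cases "g = ?h")
      case True
      have "((\<lambda>t. ?h x + t * ?h v) has_real_derivative ?h v) (at 0)" for x
        by (auto intro!: derivative_eq_intros)
      thus ?thesis using True hl by (intro bexI[of _ "\<lambda>_. ?h v"]) auto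
    next
      case False
      then obtain r where "g = (\<lambda>_. r)" using g by auto
      thus ?thesis by (intro bexI[of _ "\<lambda>_. 0"]) auto
    qed
  qed
qed

lemma smap_cont: "continuous_on UNIV (smap n \<alpha> i j sg S)"
  unfolding smap_def
  by (intro continuous_on_Pair continuous_on_coordinatewise_then_product cont_if continuous_on_const
      cont_fstk cont_sndk cont_scal)

lemma qjof_cont: "continuous_on S f \<Longrightarrow> continuous_on S (\<lambda>x. qjof sg r (f x))"
  unfolding qjof_def by (intro cont_if cont_scal cont_J)

lemma lift_cont: "continuous_on UNIV (lift n \<alpha> i j sg S)"
  unfolding lift_def
  by (intro continuous_on_Pair continuous_on_coordinatewise_then_product cont_if continuous_on_const
      cont_fstk cont_sndk cont_scal qjof_cont)

lemma scal_lin: "c *s (a + t *\<^sub>R b) = c *s a + t *\<^sub>R (c *s (b::complex^2))"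
  by (simp add: vec_eq_iff vector_scalar_mult_def scaleR_vec_def algebra_simps)
lemma scal_comm: "c *s (t *\<^sub>R b) = t *\<^sub>R (c *s (b::complex^2))"
  by (simp add: vec_eq_iff vector_scalar_mult_def scaleR_vec_def)
lemma J_lin: "Jv (a + t *\<^sub>R b) = Jv a + t *\<^sub>R Jv b"
  by (simp add: vec_eq_iff Jv_def scaleR_vec_def forall_2 complex_eq_iff)
lemma qjof_lin: "qjof sg r (a + t *\<^sub>R b) = qjof sg r a + t *\<^sub>R qjof sg r b"
  by (simp add: qjof_def scal_lin J_lin scal_comm)

lemma smap_lin: "smap n \<alpha> i j sg S (padd x t v) = padd (smap n \<alpha> i j sg S x) t (smap n \<alpha> i j sg S v)"
  by (simp add: smap_def padd_def prod_eq_iff fun_eq_iff scal_lin scal_comm)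

lemma lift_lin: "lift n \<alpha> i j sg S (padd x t v) = padd (lift n \<alpha> i j sg S x) t (lift n \<alpha> i j sg S v)"
  by (simp add: lift_def padd_def prod_eq_iff fun_eq_iff scal_lin qjof_lin scal_comm)

lemma smap_smooth: "smooth_hmap_on UNIV (smap n \<alpha> i j sg S)"
  by (rule smooth_lin_map[OF smap_cont smap_lin])
lemma lift_smooth: "smooth_hmap_on UNIV (lift n \<alpha> i j sg S)"
  by (rule smooth_lin_map[OF lift_cont lift_lin])


lemma Xsp_nonempty: "c \<in> Xsp N \<alpha> \<Longrightarrow> \<exists>x. x \<in> c"
  unfolding Xsp_def
  by (metis equiv_class_self orbrel_equiv quotientE)

context hsetup begin

lemma main_sg:
  assumes sg: "sg = 1 \<or> sg = -1"
  shows "\<exists>s. qdiffeo (DD n \<alpha> i j sg \<inter> U n \<alpha> S) (U (n - 1) (alpha_pm n \<alpha> i j sg) S) s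
            \<and> (\<forall>c\<in>DD n \<alpha> i j sg \<inter> U n \<alpha> S. \<forall>x\<in>c.
                 s c = hclass (n - 1) (alpha_pm n \<alpha> i j sg) (smap n \<alpha> i j sg S x))"
proof -
  let ?A = "DD n \<alpha> i j sg \<inter> U n \<alpha> S"
  let ?a = "alpha_pm n \<alpha> i j sg"
  let ?B = "U (n - 1) ?a S"
  let ?sm = "smap n \<alpha> i j sg S"
  let ?lf = "lift n \<alpha> i j sg S"
  define s where "s c = hclass (n-1) ?a (?sm (SOME x. x \<in> c))" for c
  have memA: "x \<in> level n \<alpha> \<and> Ucond n S x \<and> Dcond i j sg x \<and> c = hclass n \<alpha> x"
    if "c \<in> ?A" "x \<in> c" for c x
    using that Xsp_class[of c n \<alpha> x] unfolding DD_def U_eq by blast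
  have memB: "y \<in> level (n-1) ?a \<and> Ucond (n-1) S y \<and> c = hclass (n-1) ?a y"
    if "c \<in> ?B" "y \<in> c" for c y
    using that Xsp_class[of c "n-1" ?a y] unfolding U_eq by blast
  have smL: "?sm x \<in> level (n-1) ?a" if "c \<in> ?A" "x \<in> c" for c x
  proof -
    have m: "x \<in> level n \<alpha>" "Ucond n S x" "Dcond i j sg x" using memA[OF that] by blast+
    show ?thesis
      by (rule smap_level[OF sg m(1)]) (use m key_ratio[OF sg m] in \<open>auto simp: Ucond_def\<close>)
  qed
  have WD: "s c = hclass (n-1) ?a (?sm x)" if c: "c \<in> ?A" and x: "x \<in> c" for c x
  proof -
    let ?z = "SOME x. x \<in> c"
    have z: "?z \<in> c" using x by (rule someI)
    have cz: "c = hclass n \<alpha> ?z" using memA[OF c z] by blast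
    have "x \<in> hclass n \<alpha> ?z" using x cz by simp
    then obtain A e where Ae: "A \<in> SU2" "\<forall>k. cmod (e k) = 1" "x = kact ?z A e"
      using hclass_mem by blast
    have "?sm x = kact (?sm ?z) A (eprime e)" using Ae(3) smap_kact by simp
    hence "hclass (n-1) ?a (?sm ?z) = hclass (n-1) ?a (?sm x)"
      using hclass_eqI[OF smL[OF c z] smL[OF c x] Ae(1) eprime_norm[OF Ae(2)]] by simp
    thus ?thesis unfolding s_def .
  qed
  have sB: "s c \<in> ?B" if c: "c \<in> ?A" for c
  proof -
    obtain x where x: "x \<in> c" using Xsp_nonempty c unfolding DD_def by blast
    have "Ucond n S x" using memA[OF c x] by blast
    hence "Ucond (n-1) S (?sm x)" by (rule smap_Ucond)
    thus ?thesis using WD[OF c x] class_in_U[OF smL[OF c x]] by simp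
  qed
  have inj: "inj_on s ?A"
  proof (rule inj_onI)
    fix c1 c2 assume c1: "c1 \<in> ?A" and c2: "c2 \<in> ?A" and eq: "s c1 = s c2"
    obtain x1 where x1: "x1 \<in> c1" using Xsp_nonempty c1 unfolding DD_def by blast
    obtain x2 where x2: "x2 \<in> c2" using Xsp_nonempty c2 unfolding DD_def by blast
    have m1: "x1 \<in> level n \<alpha>" "Ucond n S x1" "Dcond i j sg x1" "c1 = hclass n \<alpha> x1"
      using memA[OF c1 x1] by blast+
    have m2: "x2 \<in> level n \<alpha>" "Ucond n S x2" "Dcond i j sg x2" "c2 = hclass n \<alpha> x2"
      using memA[OF c2 x2] by blast+
    have "hclass (n-1) ?a (?sm x1) = hclass (n-1) ?a (?sm x2)" using eq WD[OF c1 x1] WD[OF c2 x2] by simp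
    hence "?sm x2 \<in> hclass (n-1) ?a (?sm x1)" using hclass_self[OF smL[OF c2 x2]] by simp
    hence "hclass n \<alpha> x1 = hclass n \<alpha> x2"
      by (rule smap_inj[OF sg m1(1) m2(1) m1(2) m2(2) m1(3) m2(3)])
    thus "c1 = c2" using m1(4) m2(4) by simp
  qed
  have liftA: "hclass n \<alpha> (?lf y) \<in> ?A \<and> ?lf y \<in> level n \<alpha> \<and> s (hclass n \<alpha> (?lf y)) = c"
    if c: "c \<in> ?B" and y: "y \<in> c" for c y
  proof -
    have m: "y \<in> level (n-1) ?a" "Ucond (n-1) S y" "c = hclass (n-1) ?a y" using memB[OF c y] by blast+
    have xl: "?lf y \<in> level n \<alpha>"
      by (rule lift_level[OF sg m(1)]) (use m(2) in \<open>simp add: Ucond_def\<close>)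
    have cA: "hclass n \<alpha> (?lf y) \<in> ?A"
      using class_in_DD[OF xl lift_Dcond[OF sg m(1,2)]] class_in_U[OF xl lift_Ucond[OF m(2)]] by blast
    have sp: "supp_ok (n-1) y" using m(1) unfolding level_iff by blast
    have "s (hclass n \<alpha> (?lf y)) = hclass (n-1) ?a (?sm (?lf y))"
      using WD[OF cA hclass_self[OF xl]] .
    also have "\<dots> = c" unfolding smap_lift[OF sg m(2) sp] m(3) ..
    finally show ?thesis using cA xl by blast
  qed
  have bij: "bij_betw s ?A ?B"
    unfolding bij_betw_def
  proof (intro conjI inj)
    show "s ` ?A = ?B"
    proof
      show "s ` ?A \<subseteq> ?B" using sB by blast
      show "?B \<subseteq> s ` ?A"
      proof
        fix c assume c: "c \<in> ?B"
        obtain y where y: "y \<in> c" using Xsp_nonempty c unfolding U_def by blast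
        show "c \<in> s ` ?A" using liftA[OF c y] by (metis image_eqI)
      qed
    qed
  qed
  have sm1: "qsmooth ?A s"
    unfolding qsmooth_def
  proof
    fix x assume "x \<in> \<Union> ?A"
    show "\<exists>W F. x \<in> W \<and> smooth_hmap_on W F \<and> (\<forall>c\<in>?A. \<forall>y\<in>c \<inter> W. F y \<in> s c)"
    proof (intro exI conjI ballI)
      show "x \<in> UNIV" by simp
      show "smooth_hmap_on UNIV ?sm" by (rule smap_smooth)
      fix c y assume c: "c \<in> ?A" and y: "y \<in> c \<inter> UNIV"
      show "?sm y \<in> s c" using WD[OF c] y hclass_self[OF smL[OF c]] by simp
    qed
  qed
  have sm2: "qsmooth ?B (inv_into ?A s)"
    unfolding qsmooth_def
  proof
    fix x assume "x \<in> \<Union> ?B"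
    show "\<exists>W F. x \<in> W \<and> smooth_hmap_on W F \<and> (\<forall>c\<in>?B. \<forall>y\<in>c \<inter> W. F y \<in> inv_into ?A s c)"
    proof (intro exI conjI ballI)
      show "x \<in> UNIV" by simp
      show "smooth_hmap_on UNIV ?lf" by (rule lift_smooth)
      fix c y assume c: "c \<in> ?B" and y: "y \<in> c \<inter> UNIV"
      have L: "hclass n \<alpha> (?lf y) \<in> ?A" "?lf y \<in> level n \<alpha>" "s (hclass n \<alpha> (?lf y)) = c"
        using liftA[OF c] y by blast+
      have "inv_into ?A s c = hclass n \<alpha> (?lf y)"
        using inv_into_f_f[OF inj L(1)] L(3) by simp
      thus "?lf y \<in> inv_into ?A s c" using hclass_self[OF L(2)] by simp
    qed
  qed
  show ?thesis
    by (intro exI[of _ s] conjI ballI) (use bij sm1 sm2 WD in \<open>auto simp: qdiffeo_def\<close>)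
qed

end


theorem mainTheorem10:
  fixes n :: nat and \<alpha> :: "nat \<Rightarrow> real" and S :: "nat set" and i j :: nat
  assumes "\<forall>k\<in>{1..n}. \<alpha> k > 0"
    and "generic n \<alpha>"
    and "S = {1..card S}" and "short n \<alpha> S" and "card S \<ge> 2"
    and "i \<in> {1..n}" and "j \<in> {1..n}" and "i \<notin> S" and "j \<notin> S"
    and "\<alpha> i > \<alpha> j"
  shows "(\<exists>s. qdiffeo (Dplus n \<alpha> i j \<inter> U n \<alpha> S) (U (n - 1) (alpha_pm n \<alpha> i j 1) S) s
            \<and> (\<forall>c\<in>Dplus n \<alpha> i j \<inter> U n \<alpha> S. \<forall>x\<in>c.
                 s c = hclass (n - 1) (alpha_pm n \<alpha> i j 1) (smap n \<alpha> i j 1 S x)))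
       \<and> (\<exists>s. qdiffeo (Dminus n \<alpha> i j \<inter> U n \<alpha> S) (U (n - 1) (alpha_pm n \<alpha> i j (-1)) S) s
            \<and> (\<forall>c\<in>Dminus n \<alpha> i j \<inter> U n \<alpha> S. \<forall>x\<in>c.
                 s c = hclass (n - 1) (alpha_pm n \<alpha> i j (-1)) (smap n \<alpha> i j (-1) S x)))"
  proof -
  interpret hsetup n \<alpha> S i j
    using assms by unfold_locales auto
  show ?thesis
    using main_sg[of 1] main_sg[of "-1"] unfolding Dplus_eq Dminus_eq by simp
qed

end
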